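(* Let $n\ge 2$ and assume the standing assumptions in the context hold. Suppose $\operatorname{rank}(\Psi_{t,t+1})=n$ for all $1\le t\le\sigma-1$. Define $\Upsilon(t,t+1)=\hat{\mathcal O}_{t+1}^\dagger\mathcal Z_{t,t+1}\Psi_{t,t+1}^\dagger$ for $1\le t\le\sigma-1$. For $\mu\in\mathbb{S}$ define $$\Upsilon(\mu,1)=\Upsilon(1,2)^{-1}\Upsilon(2,3)^{-1}\cdots\Upsilon(\mu-1,\mu)^{-1},$$ with $\Upsilon(1,1)=I_n$. Set $$\check A_\mu=\Upsilon(\mu,1)\hat A_\mu\Upsilon(\mu,1)^{-1},\quad \check B_\mu=\Upsilon(\mu,1)\hat B_\mu,\quad \check C_\mu=\hat C_\mu\Upsilon(\mu,1)^{-1},\quad \check D_\mu=\hat D_\mu,$$ and let $\check{\mathcal P}=\{(\check A_\mu,\check B_\mu,\check C_\mu,\check D_\mu)\}_{\mu\in\mathbb{S}}$. Then $\Upsilon(\mu,1)=T_1^{-1}T_\mu$ for every $\mu$. Moreover, the LSS with discrete states $\check{\mathcal P}$ has the same input-output map as the true LSS. That is, for every hybrid input (arbitrary switching sequence, with no dwell-time restriction, and arbitrary continuous input) and every initial state $x(0)$, the output of the LSS with discrete states $\check{\mathcal P}$ started from $T_1^{-1}x(0)$ equals the output of the true LSS started from $x(0)$. In particular, the Markov parameters of the two systems coincide.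
   Context: **System data.** Consider the true LSS $$x(k+1)=A_{\varphi(k)}x(k)+B_{\varphi(k)}u(k),\qquad y(k)=C_{\varphi(k)}x(k)+D_{\varphi(k)}u(k),$$ with state dimension $n$ and discrete states $\mathcal P_j=(A_j,B_j,C_j,D_j)$, $j\in\mathbb{S}=\{1,\dots,\sigma\}$. Data $(u(k),\varphi(k),y(k))$, $k\in[1,N]$, are observed, and $\varphi$ is surjective onto $\mathbb{S}$. **Switching times and dwell times.** Write $k_0=1<k_1<\dots<k_{i^*}<k_{i^*+1}=N$, with $\varphi$ constant on each $[k_i,k_{i+1})$ and changing at each $k_i$, $1\le i\le i^*$. Set $\delta_*=\min_i(k_{i+1}-k_i)$. **Standing assumptions.** - Each $\mathcal P_j$ is minimal of McMillan degree $n$, has invertible $A_j$, and is BIBO stable. - $\delta_*\ge n$ for the observed data. - Estimates $\hat{\mathcal P}_j=(\hat A_j,\hat B_j,\hat C_j,\hat D_j)$, one per mode, satisfy $$\hat A_j=T_j^{-1}A_jT_j,\quad \hat B_j=T_j^{-1}B_j,\quad \hat C_j=C_jT_j,\quad \hat D_j=D_j$$ for unknown nonsingular $T_j$. **Constructions.** Let $q=\delta_*-1$, and let $$\hat{\mathcal O}_j=[\hat C_j^T\ (\hat C_j\hat A_j)^T\cdots(\hat C_j\hat A_j^{q})^T]^T.$$ Let $\hat\Gamma_j$ be the block lower-triangular Toeplitz matrix with $(q+1)\times(q+1)$ blocks, diagonal blocks $\hat D_j$, and $(r,s)$ block $\hat C_j\hat A_j^{r-s-1}\hat B_j$ for $r>s$.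 For $1\le i\le i^*$, write $\nu=\varphi(k_{i-1})$ and $\mu=\varphi(k_i)$, and define: - $\hat x(k_{i-1})=\hat{\mathcal O}_\nu^\dagger(Y_{i-1}-\hat\Gamma_\nu U_{i-1})$, with $Y_{i-1},U_{i-1}$ the stacked outputs and inputs over $[k_{i-1},k_{i-1}+q]$, and $X^\dagger=(X^TX)^{-1}X^T$; - $\kappa_{i-1}=\hat A_\nu^{k_i-k_{i-1}}\hat x(k_{i-1})+\sum_{l=k_{i-1}}^{k_i-1}\hat A_\nu^{k_i-l-1}\hat B_\nu u(l)$; - $\zeta_i(k)=y(k)-\hat D_\mu u(k)-\sum_{l=k_i}^{k-1}\hat C_\mu\hat A_\mu^{k-l-1}\hat B_\mu u(l)$ for $k\in[k_i,k_{i+1})$; - $Z_i=[\zeta_i(k_i)^T\cdots\zeta_i(k_i+q)^T]^T$. Let $\mathcal N_{\nu,\mu}=\{i\in[1,i^*]:\varphi(k_{i-1})=\nu,\ \varphi(k_i)=\mu\}$. Let $\Psi_{\nu,\mu}$ have columns $\kappa_{i-1}$ and $\mathcal Z_{\nu,\mu}$ have columns $Z_i$, for $i\in\mathcal N_{\nu,\mu}$ in increasing order. Set $\Psi^\dagger=\Psi^T(\Psi\Psi^T)^{-1}$. *)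

theory Defs
  imports "Jordan_Normal_Form.Gauss_Jordan_Elimination" "Jordan_Normal_Form.DL_Rank"
begin

definition minv :: "real mat \<Rightarrow> real mat" where
  "minv M = the (mat_inverse M)"

definition pinv_left :: "real mat \<Rightarrow> real mat" where
  "pinv_left X = minv (transpose_mat X * X) * transpose_mat X"

definition pinv_right :: "real mat \<Rightarrow> real mat" where
  "pinv_right X = transpose_mat X * minv (X * transpose_mat X)"

definition vsum :: "nat \<Rightarrow> (nat \<Rightarrow> real vec) \<Rightarrow> nat set \<Rightarrow> real vec" where
  "vsum d f S = vec d (\<lambda>r. \<Sum>l\<in>S. f l $ r)"

primrec lss_state :: "(nat \<Rightarrow> real mat) \<Rightarrow> (nat \<Rightarrow> real mat) \<Rightarrow> (nat \<Rightarrow> nat)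
    \<Rightarrow> (nat \<Rightarrow> real vec) \<Rightarrow> real vec \<Rightarrow> nat \<Rightarrow> real vec" where
  "lss_state A B phi u x0 0 = x0"
| "lss_state A B phi u x0 (Suc k) =
     A (phi k) *\<^sub>v lss_state A B phi u x0 k + B (phi k) *\<^sub>v u k"

definition lss_output :: "(nat \<Rightarrow> real mat) \<Rightarrow> (nat \<Rightarrow> real mat) \<Rightarrow> (nat \<Rightarrow> real mat)
    \<Rightarrow> (nat \<Rightarrow> real mat) \<Rightarrow> (nat \<Rightarrow> nat) \<Rightarrow> (nat \<Rightarrow> real vec) \<Rightarrow> real vec \<Rightarrow> nat \<Rightarrow> real vec" where
  "lss_output A B C D phi u x0 k =
     C (phi k) *\<^sub>v lss_state A B phi u x0 k + D (phi k) *\<^sub>v u k"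

text \<open>Markov parameter for a mode word w = [j0, j1, ..., jk] (in time order):
  D j0 if k = 0, and C jk * A j(k-1) * ... * A j1 * B j0 otherwise.\<close>
fun markov :: "(nat \<Rightarrow> real mat) \<Rightarrow> (nat \<Rightarrow> real mat) \<Rightarrow> (nat \<Rightarrow> real mat)
    \<Rightarrow> (nat \<Rightarrow> real mat) \<Rightarrow> nat list \<Rightarrow> real mat" where
  "markov A B C D [] = 0\<^sub>m 0 0"
| "markov A B C D [j] = D j"
| "markov A B C D (j0 # j1 # w) =
     C (last (j1 # w)) * foldl (\<lambda>M j. A j * M) (B j0) (butlast (j1 # w))"

text \<open>Extended observability matrix [C; CA; ...; CA^q] (p = number of outputs).\<close>
definition obs_mat :: "nat \<Rightarrow> nat \<Rightarrow> real mat \<Rightarrow> real mat \<Rightarrow> real mat" where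
  "obs_mat p q A C = mat (Suc q * p) (dim_col A) (\<lambda>(r, c). (C * A ^\<^sub>m (r div p)) $$ (r mod p, c))"

text \<open>Controllability matrix [B AB ... A^(n-1) B] (m = number of inputs).\<close>
definition ctrb_mat :: "nat \<Rightarrow> nat \<Rightarrow> real mat \<Rightarrow> real mat \<Rightarrow> real mat" where
  "ctrb_mat n m A B = mat n (n * m) (\<lambda>(r, c). (A ^\<^sub>m (c div m) * B) $$ (r, c mod m))"

definition minimal_sys :: "nat \<Rightarrow> nat \<Rightarrow> nat \<Rightarrow> real mat \<Rightarrow> real mat \<Rightarrow> real mat \<Rightarrow> bool" where
  "minimal_sys n m p A B C \<longleftrightarrow>
     vec_space.rank n (ctrb_mat n m A B) = n \<and> vec_space.rank (n * p) (obs_mat p (n - 1) A C) = n"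

definition bibo_stable :: "nat \<Rightarrow> nat \<Rightarrow> nat \<Rightarrow> real mat \<Rightarrow> real mat \<Rightarrow> real mat \<Rightarrow> real mat \<Rightarrow> bool" where
  "bibo_stable n m p A B C D \<longleftrightarrow>
     (\<forall>u. (\<forall>k. u k \<in> carrier_vec m) \<longrightarrow> (\<exists>M. \<forall>k i. i < m \<longrightarrow> \<bar>u k $ i\<bar> \<le> M) \<longrightarrow>
       (\<exists>M. \<forall>k i. i < p \<longrightarrow>
          \<bar>lss_output (\<lambda>_. A) (\<lambda>_. B) (\<lambda>_. C) (\<lambda>_. D) (\<lambda>_. 0) u (0\<^sub>v n) k $ i\<bar> \<le> M))"

text \<open>Block lower-triangular Toeplitz matrix with (q+1)x(q+1) blocks.\<close>
definition toep_mat :: "nat \<Rightarrow> nat \<Rightarrow> nat \<Rightarrow> real mat \<Rightarrow> real mat \<Rightarrow> real mat \<Rightarrow> real mat \<Rightarrow> real mat" where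
  "toep_mat p m q A B C D = mat (Suc q * p) (Suc q * m) (\<lambda>(r, c).
     (let a = r div p; b = c div m in
      if a = b then D $$ (r mod p, c mod m)
      else if b < a then (C * A ^\<^sub>m (a - b - 1) * B) $$ (r mod p, c mod m)
      else 0))"

definition stack :: "nat \<Rightarrow> nat \<Rightarrow> (nat \<Rightarrow> real vec) \<Rightarrow> nat \<Rightarrow> real vec" where
  "stack d q f k = vec (Suc q * d) (\<lambda>r. f (k + r div d) $ (r mod d))"

definition dstar :: "(nat \<Rightarrow> nat) \<Rightarrow> nat \<Rightarrow> nat" where
  "dstar ks istar = Min ((\<lambda>i. ks (Suc i) - ks i) ` {0..istar})"

definition xhat :: "nat \<Rightarrow> nat \<Rightarrow> nat \<Rightarrow> (nat \<Rightarrow> real mat) \<Rightarrow> (nat \<Rightarrow> real mat) \<Rightarrow> (nat \<Rightarrow> real mat)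
    \<Rightarrow> (nat \<Rightarrow> real mat) \<Rightarrow> (nat \<Rightarrow> nat) \<Rightarrow> (nat \<Rightarrow> real vec) \<Rightarrow> (nat \<Rightarrow> real vec) \<Rightarrow> nat \<Rightarrow> real vec" where
  "xhat p m q Ah Bh Ch Dh phi u y k =
     pinv_left (obs_mat p q (Ah (phi k)) (Ch (phi k))) *\<^sub>v
       (stack p q y k - toep_mat p m q (Ah (phi k)) (Bh (phi k)) (Ch (phi k)) (Dh (phi k)) *\<^sub>v stack m q u k)"

text \<open>kappa_(i-1) (argument i, 1 <= i <= istar).\<close>
definition kappa :: "nat \<Rightarrow> nat \<Rightarrow> nat \<Rightarrow> nat \<Rightarrow> (nat \<Rightarrow> real mat) \<Rightarrow> (nat \<Rightarrow> real mat) \<Rightarrow> (nat \<Rightarrow> real mat)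
    \<Rightarrow> (nat \<Rightarrow> real mat) \<Rightarrow> (nat \<Rightarrow> nat) \<Rightarrow> (nat \<Rightarrow> real vec) \<Rightarrow> (nat \<Rightarrow> real vec) \<Rightarrow> (nat \<Rightarrow> nat) \<Rightarrow> nat \<Rightarrow> real vec" where
  "kappa n p m q Ah Bh Ch Dh phi u y ks i =
     (let nu = phi (ks (i - 1)) in
      Ah nu ^\<^sub>m (ks i - ks (i - 1)) *\<^sub>v xhat p m q Ah Bh Ch Dh phi u y (ks (i - 1))
      + vsum n (\<lambda>l. Ah nu ^\<^sub>m (ks i - l - 1) *\<^sub>v (Bh nu *\<^sub>v u l)) {ks (i - 1)..ks i - 1})"

definition zeta :: "nat \<Rightarrow> (nat \<Rightarrow> real mat) \<Rightarrow> (nat \<Rightarrow> real mat) \<Rightarrow> (nat \<Rightarrow> real mat)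
    \<Rightarrow> (nat \<Rightarrow> real mat) \<Rightarrow> (nat \<Rightarrow> nat) \<Rightarrow> (nat \<Rightarrow> real vec) \<Rightarrow> (nat \<Rightarrow> real vec) \<Rightarrow> (nat \<Rightarrow> nat)
    \<Rightarrow> nat \<Rightarrow> nat \<Rightarrow> real vec" where
  "zeta p Ah Bh Ch Dh phi u y ks i k =
     (let mu = phi (ks i) in
      y k - Dh mu *\<^sub>v u k
      - vsum p (\<lambda>l. Ch mu *\<^sub>v (Ah mu ^\<^sub>m (k - l - 1) *\<^sub>v (Bh mu *\<^sub>v u l))) {ks i..k - 1})"

definition Zvec :: "nat \<Rightarrow> nat \<Rightarrow> (nat \<Rightarrow> real mat) \<Rightarrow> (nat \<Rightarrow> real mat) \<Rightarrow> (nat \<Rightarrow> real mat)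
    \<Rightarrow> (nat \<Rightarrow> real mat) \<Rightarrow> (nat \<Rightarrow> nat) \<Rightarrow> (nat \<Rightarrow> real vec) \<Rightarrow> (nat \<Rightarrow> real vec) \<Rightarrow> (nat \<Rightarrow> nat)
    \<Rightarrow> nat \<Rightarrow> real vec" where
  "Zvec p q Ah Bh Ch Dh phi u y ks i = stack p q (zeta p Ah Bh Ch Dh phi u y ks i) (ks i)"

definition trans_idx :: "(nat \<Rightarrow> nat) \<Rightarrow> (nat \<Rightarrow> nat) \<Rightarrow> nat \<Rightarrow> nat \<Rightarrow> nat \<Rightarrow> nat set" where
  "trans_idx phi ks istar nu mu = {i \<in> {1..istar}. phi (ks (i - 1)) = nu \<and> phi (ks i) = mu}"

definition Psi_mat :: "nat \<Rightarrow> nat \<Rightarrow> nat \<Rightarrow> (nat \<Rightarrow> real mat) \<Rightarrow> (nat \<Rightarrow> real mat) \<Rightarrow> (nat \<Rightarrow> real mat)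
    \<Rightarrow> (nat \<Rightarrow> real mat) \<Rightarrow> (nat \<Rightarrow> nat) \<Rightarrow> (nat \<Rightarrow> real vec) \<Rightarrow> (nat \<Rightarrow> real vec) \<Rightarrow> (nat \<Rightarrow> nat)
    \<Rightarrow> nat \<Rightarrow> nat \<Rightarrow> nat \<Rightarrow> real mat" where
  "Psi_mat n p m Ah Bh Ch Dh phi u y ks istar nu mu =
     mat_of_cols n (map (kappa n p m (dstar ks istar - 1) Ah Bh Ch Dh phi u y ks)
                        (sorted_list_of_set (trans_idx phi ks istar nu mu)))"

definition Zcal_mat :: "nat \<Rightarrow> (nat \<Rightarrow> real mat) \<Rightarrow> (nat \<Rightarrow> real mat) \<Rightarrow> (nat \<Rightarrow> real mat)
    \<Rightarrow> (nat \<Rightarrow> real mat) \<Rightarrow> (nat \<Rightarrow> nat) \<Rightarrow> (nat \<Rightarrow> real vec) \<Rightarrow> (nat \<Rightarrow> real vec) \<Rightarrow> (nat \<Rightarrow> nat)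
    \<Rightarrow> nat \<Rightarrow> nat \<Rightarrow> nat \<Rightarrow> real mat" where
  "Zcal_mat p Ah Bh Ch Dh phi u y ks istar nu mu =
     mat_of_cols (Suc (dstar ks istar - 1) * p)
       (map (Zvec p (dstar ks istar - 1) Ah Bh Ch Dh phi u y ks)
            (sorted_list_of_set (trans_idx phi ks istar nu mu)))"

definition Ups_step :: "nat \<Rightarrow> nat \<Rightarrow> nat \<Rightarrow> (nat \<Rightarrow> real mat) \<Rightarrow> (nat \<Rightarrow> real mat) \<Rightarrow> (nat \<Rightarrow> real mat)
    \<Rightarrow> (nat \<Rightarrow> real mat) \<Rightarrow> (nat \<Rightarrow> nat) \<Rightarrow> (nat \<Rightarrow> real vec) \<Rightarrow> (nat \<Rightarrow> real vec) \<Rightarrow> (nat \<Rightarrow> nat)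
    \<Rightarrow> nat \<Rightarrow> nat \<Rightarrow> real mat" where
  "Ups_step n p m Ah Bh Ch Dh phi u y ks istar t =
     pinv_left (obs_mat p (dstar ks istar - 1) (Ah (Suc t)) (Ch (Suc t)))
     * Zcal_mat p Ah Bh Ch Dh phi u y ks istar t (Suc t)
     * pinv_right (Psi_mat n p m Ah Bh Ch Dh phi u y ks istar t (Suc t))"

definition Ups_chain :: "nat \<Rightarrow> (nat \<Rightarrow> real mat) \<Rightarrow> nat \<Rightarrow> real mat" where
  "Ups_chain n U mu = foldl (\<lambda>M t. M * minv (U t)) (1\<^sub>m n) [1..<mu]"

end

theory Submission
  imports Defs
begin

lemma invertible_det:
  fixes A :: "real mat"
  assumes A: "A \<in> carrier_mat n n" and inv: "invertible_mat A"
  shows "det A \<noteq> 0"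
proof -
  from inv obtain B where AB: "A * B = 1\<^sub>m (dim_row A)" and BA: "B * A = 1\<^sub>m (dim_row B)"
    unfolding invertible_mat_def inverts_mat_def by blast
  have "dim_row B = n" using BA A by (metis carrier_matD(2) index_mult_mat(3) index_one_mat(3))
  moreover have "dim_col B = n" using AB A by (metis carrier_matD(1) index_mult_mat(3) index_one_mat(3))
  ultimately have B: "B \<in> carrier_mat n n" by auto
  have "det A * det B = 1" using det_mult[OF A B] AB A by simp
  thus ?thesis by auto
qed

lemma minv_props:
  fixes A :: "real mat"
  assumes A: "A \<in> carrier_mat n n" and d: "det A \<noteq> 0"
  shows "A * minv A = 1\<^sub>m n" "minv A * A = 1\<^sub>m n" "minv A \<in> carrier_mat n n"
proof -
  have U: "A \<in> Units (ring_mat TYPE(real) n undefined)" by (rule det_non_zero_imp_unit[OF A d])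
  have "mat_inverse A \<noteq> None" using mat_inverse(1)[OF A, of undefined] U by auto
  then obtain B where S: "mat_inverse A = Some B" by auto
  have "minv A = B" unfolding minv_def S by simp
  with mat_inverse(2)[OF A S] show "A * minv A = 1\<^sub>m n" "minv A * A = 1\<^sub>m n" "minv A \<in> carrier_mat n n" by auto
qed

lemma minv_unique:
  fixes A B :: "real mat"
  assumes A: "A \<in> carrier_mat n n" and B: "B \<in> carrier_mat n n" and AB: "A * B = 1\<^sub>m n"
  shows "minv A = B"
proof -
  have "det A * det B = 1" using det_mult[OF A B] AB by simp
  hence d: "det A \<noteq> 0" by auto
  note m = minv_props[OF A d]
  have "minv A = minv A * (A * B)" using AB m(3) by simp
  also have "\<dots> = (minv A * A) * B" using m(3) A B by (simp add: assoc_mult_mat)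
  also have "\<dots> = B" using m(2) B by simp
  finally show ?thesis .
qed

lemma self_scalar_zero:
  fixes w :: "real vec"
  assumes w: "w \<in> carrier_vec n" and z: "w \<bullet> w = 0"
  shows "w = 0\<^sub>v n"
proof -
  have s: "(\<Sum>i<n. w $ i * w $ i) = 0" using z w unfolding scalar_prod_def
    by (simp add: atLeast0LessThan)
  have "\<forall>i\<in>{..<n}. w $ i * w $ i = 0"
    using sum_nonneg_eq_0_iff[of "{..<n}" "\<lambda>i. w $ i * w $ i"] s by auto
  thus ?thesis using w by (intro eq_vecI) auto
qed

lemma (in vec_space) fullrank_kernel:
  fixes X :: "'a mat"
  assumes X: "X \<in> carrier_mat n c" and rk: "rank X = c"
    and v: "v \<in> carrier_vec c" and Xv: "X *\<^sub>v v = 0\<^sub>v n"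
  shows "v = 0\<^sub>v c"
proof (rule ccontr)
  assume nz: "v \<noteq> 0\<^sub>v c"
  have dist: "distinct (cols X)"
  proof (rule ccontr)
    assume nd: "\<not> distinct (cols X)"
    obtain S where S: "maximal S (\<lambda>T. T \<subseteq> set (cols X) \<and> lin_indpt T)"
      using maximal_exists[of "(\<lambda>T. T \<subseteq> set (cols X) \<and> lin_indpt T)" "card (set (cols X))" "{}"]
      by (meson List.finite_set card_mono empty_iff empty_subsetI finite_lin_indpt2 rev_finite_subset)
    have "card S \<le> card (set (cols X))" using S by (simp add: card_mono maximal_def)
    moreover have "card (set (cols X)) < c"
      using nd X card_distinct[of "cols X"] card_length[of "cols X"] by (metis cols_length carrier_matD(2) le_neq_implies_less)
    moreover have "rank X = card S" using rank_card_indpt[OF X S] .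
    ultimately show False using rk by simp
  qed
  have "lin_indpt (set (cols X))" using full_rank_lin_indpt[OF X rk dist] .
  moreover have "lin_dep (set (cols X))" using lin_depI[OF X v nz Xv dist] .
  ultimately show False by simp
qed

lemma gram_left_det:
  fixes X :: "real mat"
  assumes X: "X \<in> carrier_mat r c" and ker: "\<And>v. v \<in> carrier_vec c \<Longrightarrow> X *\<^sub>v v = 0\<^sub>v r \<Longrightarrow> v = 0\<^sub>v c"
  shows "det (transpose_mat X * X) \<noteq> 0"
proof
  assume "det (transpose_mat X * X) = 0"
  then obtain v where v: "v \<in> carrier_vec c" "v \<noteq> 0\<^sub>v c" "(transpose_mat X * X) *\<^sub>v v = 0\<^sub>v c"
    using det_0_iff_vec_prod_zero_field[of "transpose_mat X * X" c] X by auto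
  have XT: "transpose_mat X \<in> carrier_mat c r" using X by auto
  have Xv: "X *\<^sub>v v \<in> carrier_vec r" using X v by auto
  have "(transpose_mat X *\<^sub>v (X *\<^sub>v v)) = 0\<^sub>v c" using v(3) assoc_mult_mat_vec[OF XT X v(1)] by simp
  hence "(transpose_mat X *\<^sub>v (X *\<^sub>v v)) \<bullet> v = 0" using v by simp
  hence "(X *\<^sub>v v) \<bullet> (X *\<^sub>v v) = 0" using transpose_vec_mult_scalar[OF X v(1) Xv] by simp
  hence "X *\<^sub>v v = 0\<^sub>v r" using self_scalar_zero Xv by blast
  thus False using ker v by blast
qed

lemma (in vec_space) fullrow_kernel:
  fixes X :: "'a mat"
  assumes X: "X \<in> carrier_mat n c" and rk: "rank X = n"
    and w: "w \<in> carrier_vec n" and Xw: "transpose_mat X *\<^sub>v w = 0\<^sub>v c"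
  shows "w \<bullet> w = 0"
proof -
  obtain S where S: "maximal S (\<lambda>T. T \<subseteq> set (cols X) \<and> lin_indpt T)"
    using maximal_exists[of "(\<lambda>T. T \<subseteq> set (cols X) \<and> lin_indpt T)" "card (set (cols X))" "{}"]
    by (meson List.finite_set card_mono empty_iff empty_subsetI finite_lin_indpt2 rev_finite_subset)
  have cS: "card S = n" using rank_card_indpt[OF X S] rk by simp
  have Ssub: "S \<subseteq> set (cols X)" and li: "lin_indpt S" using S unfolding maximal_def by auto
  have colsC: "set (cols X) \<subseteq> carrier_vec n" using X cols_dim by blast
  have fS: "finite S" using Ssub finite_subset by blast
  have "basis S" using dim_li_is_basis[OF fin_dim fS _ li] Ssub colsC cS dim_is_n by auto
  hence spS: "span S = carrier_vec n" unfolding basis_def by auto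
  have "span S \<subseteq> span (set (cols X))" using span_is_monotone[OF Ssub] .
  hence wsp: "w \<in> span (set (cols X))" using w spS by auto
  have "w \<in> orthogonal_complement (set (cols X))"
    unfolding orthogonal_complement_def
  proof (intro CollectI conjI ballI)
    show "w \<in> carrier_vec n" by fact
    fix y assume "y \<in> set (cols X)"
    then obtain j where j: "j < c" "y = col X j" using X by (auto simp: in_set_conv_nth)
    have "(transpose_mat X *\<^sub>v w) $ j = 0" using Xw j by simp
    hence "col X j \<bullet> w = 0" using X j by simp
    moreover have "y \<in> carrier_vec n" using j X by auto
    ultimately show "w \<bullet> y = 0" using j comm_scalar_prod[OF w, of y] by simp
  qed
  hence "w \<in> orthogonal_complement (span (set (cols X)))" using in_orthogonal_complement_span[OF colsC] by simp
  thus "w \<bullet> w = 0" using wsp unfolding orthogonal_complement_def by auto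
qed

lemma gram_right_det:
  fixes X :: "real mat"
  assumes X: "X \<in> carrier_mat n c" and rk: "vec_space.rank n X = n"
  shows "det (X * transpose_mat X) \<noteq> 0"
proof -
  have XT: "transpose_mat X \<in> carrier_mat c n" using X by auto
  have "det (transpose_mat (transpose_mat X) * transpose_mat X) \<noteq> 0"
    by (rule gram_left_det[OF XT], rule self_scalar_zero, auto intro: vec_space.fullrow_kernel[OF X rk])
  thus ?thesis by simp
qed


lemma pinv_left_id:
  fixes X :: "real mat"
  assumes X: "X \<in> carrier_mat r c" and d: "det (transpose_mat X * X) \<noteq> 0"
  shows "pinv_left X * X = 1\<^sub>m c"
proof -
  have G: "transpose_mat X * X \<in> carrier_mat c c" using X by auto
  note m = minv_props[OF G d]
  have "pinv_left X * X = minv (transpose_mat X * X) * (transpose_mat X * X)"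
    unfolding pinv_left_def using m(3) X by (simp add: assoc_mult_mat[of _ c c _ r _ c])
  thus ?thesis using m(2) by simp
qed

lemma pinv_right_id:
  fixes X :: "real mat"
  assumes X: "X \<in> carrier_mat r c" and d: "det (X * transpose_mat X) \<noteq> 0"
  shows "X * pinv_right X = 1\<^sub>m r"
proof -
  have G: "X * transpose_mat X \<in> carrier_mat r r" using X by auto
  note m = minv_props[OF G d]
  have "X * pinv_right X = (X * transpose_mat X) * minv (X * transpose_mat X)"
    unfolding pinv_right_def using m(3) X by (simp add: assoc_mult_mat[of _ r c _ c _ r])
  thus ?thesis using m(1) by simp
qed


lemma mult_nn[simp]: "A \<in> carrier_mat n n \<Longrightarrow> B \<in> carrier_mat n n \<Longrightarrow> A * B \<in> carrier_mat n n"
  by auto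

lemma pow_Suc_left:
  fixes A :: "real mat"
  assumes A: "A \<in> carrier_mat n n"
  shows "A ^\<^sub>m Suc k = A * A ^\<^sub>m k"
proof (induction k)
  case 0 then show ?case using A by simp
next
  case (Suc k)
  have "A ^\<^sub>m Suc (Suc k) = (A * A ^\<^sub>m k) * A" using Suc by simp
  also have "\<dots> = A * (A ^\<^sub>m k * A)" using A by (simp add: assoc_mult_mat[of _ n n _ n _ n])
  finally show ?case by simp
qed

lemma pow_sim:
  fixes A T Ti :: "real mat"
  assumes A: "A \<in> carrier_mat n n" and T: "T \<in> carrier_mat n n" and Ti: "Ti \<in> carrier_mat n n"
    and inv: "T * Ti = 1\<^sub>m n"
  shows "(Ti * A * T) ^\<^sub>m k = Ti * A ^\<^sub>m k * T"
proof (induction k)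
  case 0
  have "Ti * T = 1\<^sub>m n" using mat_mult_left_right_inverse[OF T Ti inv] .
  then show ?case using Ti A by simp
next
  case (Suc k)
  have "(Ti * A * T) ^\<^sub>m Suc k = (Ti * A ^\<^sub>m k * T) * (Ti * A * T)" using Suc by simp
  also have "\<dots> = Ti * (A ^\<^sub>m k * ((T * Ti) * (A * T)))"
    using A T Ti by (simp add: assoc_mult_mat[of _ n n _ n _ n])
  also have "\<dots> = Ti * (A ^\<^sub>m k * (A * T))" using inv A T by simp
  also have "\<dots> = Ti * A ^\<^sub>m Suc k * T"
    using A T Ti by (simp add: assoc_mult_mat[of _ n n _ n _ n])
  finally show ?case .
qed

lemma vsum_carrier[simp]: "vsum d f S \<in> carrier_vec d"
  unfolding vsum_def by simp

lemma dim_vsum[simp]: "dim_vec (vsum d f S) = d"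
  unfolding vsum_def by simp

lemma vsum_empty[simp]: "vsum d f {} = 0\<^sub>v d"
  unfolding vsum_def by (intro eq_vecI) auto

lemma vsum_cong: "(\<And>l. l \<in> S \<Longrightarrow> f l = g l) \<Longrightarrow> vsum d f S = vsum d g S"
  unfolding vsum_def by (intro eq_vecI) auto

lemma vsum_last:
  assumes "k \<le> K" "f K \<in> carrier_vec d"
  shows "vsum d f {k..<Suc K} = vsum d f {k..<K} + f K"
proof -
  have "{k..<Suc K} = insert K {k..<K}" using assms by auto
  thus ?thesis unfolding vsum_def using assms by (intro eq_vecI) auto
qed

lemma mv_carrier_row: "dim_row M = r \<Longrightarrow> M *\<^sub>v v \<in> carrier_vec r"
  by (rule carrier_vecI) simp

lemma mv_index:
  fixes M :: "real mat"
  assumes "M \<in> carrier_mat r d" "v \<in> carrier_vec d" "i < r"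
  shows "(M *\<^sub>v v) $ i = (\<Sum>j<d. M $$ (i,j) * v $ j)"
  using assms by (auto simp: scalar_prod_def atLeast0LessThan intro!: sum.cong)

lemma mult_vsum:
  fixes M :: "real mat"
  assumes M: "M \<in> carrier_mat r d" and f: "\<And>l. l \<in> S \<Longrightarrow> f l \<in> carrier_vec d" and fin: "finite S"
  shows "M *\<^sub>v vsum d f S = vsum r (\<lambda>l. M *\<^sub>v f l) S"
proof (rule eq_vecI)
  show "dim_vec (M *\<^sub>v vsum d f S) = dim_vec (vsum r (\<lambda>l. M *\<^sub>v f l) S)" using M by (simp add: vsum_def)
  fix i assume "i < dim_vec (vsum r (\<lambda>l. M *\<^sub>v f l) S)"
  hence i: "i < r" by (simp add: vsum_def)
  have "(M *\<^sub>v vsum d f S) $ i = (\<Sum>j<d. M $$ (i,j) * (\<Sum>l\<in>S. f l $ j))"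
    using M i by (simp add: scalar_prod_def vsum_def atLeast0LessThan)
  also have "\<dots> = (\<Sum>l\<in>S. \<Sum>j<d. M $$ (i,j) * f l $ j)"
    by (simp add: sum_distrib_left sum.swap[of _ S])
  also have "\<dots> = (\<Sum>l\<in>S. (M *\<^sub>v f l) $ i)"
    using f by (intro sum.cong refl) (subst mv_index[OF M _ i], auto)
  finally show "(M *\<^sub>v vsum d f S) $ i = vsum r (\<lambda>l. M *\<^sub>v f l) S $ i" using i by (simp add: vsum_def)
qed

lemma traj:
  fixes A B :: "real mat" and x u :: "nat \<Rightarrow> real vec"
  assumes A: "A \<in> carrier_mat n n" and B: "B \<in> carrier_mat n m" and xk: "x k \<in> carrier_vec n"
    and step: "\<And>l. k \<le> l \<Longrightarrow> l < k + a \<Longrightarrow> u l \<in> carrier_vec m \<and> x (Suc l) = A *\<^sub>v x l + B *\<^sub>v u l"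
  shows "x (k + a) = A ^\<^sub>m a *\<^sub>v x k + vsum n (\<lambda>l. A ^\<^sub>m (k + a - l - 1) *\<^sub>v (B *\<^sub>v u l)) {k..<k + a}"
  using step
proof (induction a)
  case 0
  then show ?case using A xk by simp
next
  case (Suc a)
  have IH: "x (k + a) = A ^\<^sub>m a *\<^sub>v x k + vsum n (\<lambda>l. A ^\<^sub>m (k + a - l - 1) *\<^sub>v (B *\<^sub>v u l)) {k..<k + a}"
    using Suc by auto
  have st: "u (k+a) \<in> carrier_vec m" "x (Suc (k + a)) = A *\<^sub>v x (k+a) + B *\<^sub>v u (k+a)" using Suc.prems[of "k+a"] by auto
  have uc: "\<And>l. l \<in> {k..<k+a} \<Longrightarrow> u l \<in> carrier_vec m" using Suc.prems by auto
  have "x (k + Suc a) = A *\<^sub>v (A ^\<^sub>m a *\<^sub>v x k) + A *\<^sub>v vsum n (\<lambda>l. A ^\<^sub>m (k + a - l - 1) *\<^sub>v (B *\<^sub>v u l)) {k..<k + a} + B *\<^sub>v u (k+a)"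
    unfolding add_Suc_right st(2) IH by (subst mult_add_distrib_mat_vec[OF A], use A xk in \<open>auto intro: mv_carrier_row\<close>)
  also have "A *\<^sub>v (A ^\<^sub>m a *\<^sub>v x k) = A ^\<^sub>m Suc a *\<^sub>v x k"
    by (subst pow_Suc_left[OF A], subst assoc_mult_mat_vec[OF A pow_carrier_mat[OF A] xk], rule refl)
  also have "A *\<^sub>v vsum n (\<lambda>l. A ^\<^sub>m (k + a - l - 1) *\<^sub>v (B *\<^sub>v u l)) {k..<k + a}
      = vsum n (\<lambda>l. A ^\<^sub>m (k + Suc a - l - 1) *\<^sub>v (B *\<^sub>v u l)) {k..<k + a}"
  proof -
    have "A *\<^sub>v vsum n (\<lambda>l. A ^\<^sub>m (k + a - l - 1) *\<^sub>v (B *\<^sub>v u l)) {k..<k + a}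
        = vsum n (\<lambda>l. A *\<^sub>v (A ^\<^sub>m (k + a - l - 1) *\<^sub>v (B *\<^sub>v u l))) {k..<k + a}"
      using uc A B by (intro mult_vsum) (auto intro: mv_carrier_row)
    also have "\<dots> = vsum n (\<lambda>l. A ^\<^sub>m (k + Suc a - l - 1) *\<^sub>v (B *\<^sub>v u l)) {k..<k + a}"
    proof (rule vsum_cong)
      fix l assume l: "l \<in> {k..<k+a}"
      have e: "k + Suc a - l - 1 = Suc (k + a - l - 1)" using l by auto
      show "A *\<^sub>v (A ^\<^sub>m (k + a - l - 1) *\<^sub>v (B *\<^sub>v u l)) = A ^\<^sub>m (k + Suc a - l - 1) *\<^sub>v (B *\<^sub>v u l)"
        unfolding e pow_Suc_left[OF A] using A B uc[OF l]
        by (intro assoc_mult_mat_vec[symmetric, OF A pow_carrier_mat[OF A]]) (auto intro: mv_carrier_row)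
    qed
    finally show ?thesis .
  qed
  also have "A ^\<^sub>m Suc a *\<^sub>v x k + vsum n (\<lambda>l. A ^\<^sub>m (k + Suc a - l - 1) *\<^sub>v (B *\<^sub>v u l)) {k..<k + a} + B *\<^sub>v u (k+a)
     = A ^\<^sub>m Suc a *\<^sub>v x k + (vsum n (\<lambda>l. A ^\<^sub>m (k + Suc a - l - 1) *\<^sub>v (B *\<^sub>v u l)) {k..<k + a} + B *\<^sub>v u (k+a))"
    using A B xk st by (intro assoc_add_vec[of _ n]) (auto intro: mv_carrier_row)
  also have "vsum n (\<lambda>l. A ^\<^sub>m (k + Suc a - l - 1) *\<^sub>v (B *\<^sub>v u l)) {k..<k + a} + B *\<^sub>v u (k+a)
     = vsum n (\<lambda>l. A ^\<^sub>m (k + Suc a - l - 1) *\<^sub>v (B *\<^sub>v u l)) {k..<k + Suc a}"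
    using vsum_last[of k "k+a" "\<lambda>l. A ^\<^sub>m (k + Suc a - l - 1) *\<^sub>v (B *\<^sub>v u l)" n] A B st by simp
  finally show ?case .
qed


lemma sum_blocks:
  fixes f :: "nat \<Rightarrow> real"
  shows "(\<Sum>c<b*m. f c) = (\<Sum>i<b. \<Sum>j<m. f (i*m+j))"
proof -
  have "(\<Sum>c<b*m. f c) = (\<Sum>i<b. sum f {i*m..<i*m+m})" by (rule sum.nat_group[symmetric])
  also have "\<dots> = (\<Sum>i<b. \<Sum>j<m. f (i*m+j))"
  proof (rule sum.cong[OF refl])
    fix i
    show "sum f {i*m..<i*m+m} = (\<Sum>j<m. f (i*m+j))"
      using sum.shift_bounds_nat_ivl[of f 0 "i*m" m] by (simp add: atLeast0LessThan add.commute)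
  qed
  finally show ?thesis .
qed

lemma sum_case3:
  fixes X Y :: "nat \<Rightarrow> real"
  assumes "a < N"
  shows "(\<Sum>b<N. if a = b then X b else if b < a then Y b else 0) = X a + (\<Sum>b<a. Y b)"
proof -
  have "(\<Sum>b<N. if a = b then X b else if b < a then Y b else 0)
      = (\<Sum>b<N. (if a = b then X b else 0) + (if b < a then Y b else 0))"
    by (intro sum.cong) auto
  also have "\<dots> = (\<Sum>b<N. if a = b then X b else 0) + (\<Sum>b<N. if b < a then Y b else 0)"
    by (rule sum.distrib)
  also have "(\<Sum>b<N. if a = b then X b else 0) = X a" using assms by (simp add: sum.delta)
  also have "(\<Sum>b<N. if b < a then Y b else 0) = (\<Sum>b\<in>{..<N} \<inter> {..<a}. Y b)"
    using sum.inter_restrict[of "{..<N}" Y "{..<a}"] by simp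
  also have "{..<N} \<inter> {..<a} = {..<a}" using assms by auto
  finally show ?thesis .
qed

lemma obs_carrier: "A \<in> carrier_mat n n \<Longrightarrow> obs_mat p q A C \<in> carrier_mat (Suc q * p) n"
  unfolding obs_mat_def by auto

lemma toep_carrier: "toep_mat p m q A B C D \<in> carrier_mat (Suc q * p) (Suc q * m)"
  unfolding toep_mat_def by auto

lemma stack_carrier: "stack d q f k \<in> carrier_vec (Suc q * d)"
  unfolding stack_def by auto

lemma stack_index: "r < Suc q * d \<Longrightarrow> stack d q f k $ r = f (k + r div d) $ (r mod d)"
  unfolding stack_def by auto

lemma obs_index:
  fixes A C :: "real mat"
  assumes A: "A \<in> carrier_mat n n" and C: "C \<in> carrier_mat p n" and r: "r < Suc q * p"
    and v: "v \<in> carrier_vec n"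
  shows "(obs_mat p q A C *\<^sub>v v) $ r = (C * A ^\<^sub>m (r div p) *\<^sub>v v) $ (r mod p)"
proof -
  have p: "p > 0" using r by (cases p) auto
  have s: "r mod p < p" using p by simp
  have CA: "C * A ^\<^sub>m (r div p) \<in> carrier_mat p n" using A C by auto
  show ?thesis
    unfolding mv_index[OF obs_carrier[OF A] v r] mv_index[OF CA v s]
    using r A by (intro sum.cong refl) (simp add: obs_mat_def)
qed

lemma toep_stack_index:
  fixes A B C D :: "real mat"
  assumes A: "A \<in> carrier_mat n n" and B: "B \<in> carrier_mat n m" and C: "C \<in> carrier_mat p n"
    and D: "D \<in> carrier_mat p m" and u: "\<And>b. b \<le> q \<Longrightarrow> u (k + b) \<in> carrier_vec m"
    and r: "r < Suc q * p"
  shows "(toep_mat p m q A B C D *\<^sub>v stack m q u k) $ r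
       = (D *\<^sub>v u (k + r div p)) $ (r mod p)
         + (\<Sum>b<r div p. (C * A ^\<^sub>m (r div p - b - 1) * B *\<^sub>v u (k + b)) $ (r mod p))"
proof -
  define a where "a = r div p"
  define s where "s = r mod p"
  have p: "p > 0" using r by (cases p) auto
  have sp: "s < p" using p by (simp add: s_def)
  have aq: "a < Suc q" using r by (simp add: a_def less_mult_imp_div_less)
  have M: "\<And>b. C * A ^\<^sub>m (a - b - 1) * B \<in> carrier_mat p m" using A B C by auto
  have "(toep_mat p m q A B C D *\<^sub>v stack m q u k) $ r
      = (\<Sum>c<Suc q * m. toep_mat p m q A B C D $$ (r, c) * stack m q u k $ c)"
    by (rule mv_index[OF toep_carrier stack_carrier r])
  also have "\<dots> = (\<Sum>b<Suc q. \<Sum>j<m. toep_mat p m q A B C D $$ (r, b*m+j) * stack m q u k $ (b*m+j))"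
    by (rule sum_blocks)
  also have "\<dots> = (\<Sum>b<Suc q. if a = b then (D *\<^sub>v u (k + b)) $ s
                     else if b < a then (C * A ^\<^sub>m (a - b - 1) * B *\<^sub>v u (k + b)) $ s else 0)"
  proof (rule sum.cong[OF refl])
    fix b assume b: "b \<in> {..<Suc q}"
    have ub: "u (k + b) \<in> carrier_vec m" using u b by auto
    have ent: "\<And>j. j < m \<Longrightarrow> toep_mat p m q A B C D $$ (r, b*m+j) * stack m q u k $ (b*m+j)
        = (if a = b then D $$ (s, j) else if b < a then (C * A ^\<^sub>m (a - b - 1) * B) $$ (s, j) else 0)
          * u (k + b) $ j"
    proof -
      fix j assume j: "j < m"
      have c: "b*m+j < Suc q * m" using b j
        by (metis add_less_cancel_left lessThan_iff less_Suc_eq_le mult_Suc mult.commute mult_le_mono2 order_less_le_trans add.commute mult_Suc_right nat_add_left_cancel_le)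
      have dm: "(b*m+j) div m = b" "(b*m+j) mod m = j" using j by auto
      show "?thesis j" unfolding toep_mat_def stack_index[OF c] using r c dm
        by (simp add: a_def s_def Let_def)
    qed
    have "(\<Sum>j<m. toep_mat p m q A B C D $$ (r, b*m+j) * stack m q u k $ (b*m+j))
       = (\<Sum>j<m. (if a = b then D $$ (s, j) else if b < a then (C * A ^\<^sub>m (a - b - 1) * B) $$ (s, j) else 0)
          * u (k + b) $ j)"
      using ent by (intro sum.cong) auto
    also have "\<dots> = (if a = b then (D *\<^sub>v u (k + b)) $ s
                     else if b < a then (C * A ^\<^sub>m (a - b - 1) * B *\<^sub>v u (k + b)) $ s else 0)"
      using mv_index[OF D ub sp] mv_index[OF M ub sp] by auto
    finally show "(\<Sum>j<m. toep_mat p m q A B C D $$ (r, b*m+j) * stack m q u k $ (b*m+j)) = \<dots>" .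
  qed
  also have "\<dots> = (D *\<^sub>v u (k + a)) $ s + (\<Sum>b<a. (C * A ^\<^sub>m (a - b - 1) * B *\<^sub>v u (k + b)) $ s)"
    by (rule sum_case3[OF aq])
  finally show ?thesis unfolding a_def s_def .
qed


lemma sum_shift_k: "(\<Sum>l\<in>{k..<k+a}. g l) = (\<Sum>b<a. g (k + b :: nat) :: real)"
  using sum.shift_bounds_nat_ivl[of g 0 k a] by (simp add: atLeast0LessThan add.commute)

lemma block:
  fixes A B C D :: "real mat" and x u y :: "nat \<Rightarrow> real vec"
  assumes A: "A \<in> carrier_mat n n" and B: "B \<in> carrier_mat n m" and C: "C \<in> carrier_mat p n"
    and D: "D \<in> carrier_mat p m" and xk: "x k \<in> carrier_vec n"
    and st: "\<And>l. k \<le> l \<Longrightarrow> l < k + q \<Longrightarrow> x (Suc l) = A *\<^sub>v x l + B *\<^sub>v u l"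
    and uy: "\<And>l. k \<le> l \<Longrightarrow> l \<le> k + q \<Longrightarrow> u l \<in> carrier_vec m \<and> y l = C *\<^sub>v x l + D *\<^sub>v u l"
  shows "stack p q y k - toep_mat p m q A B C D *\<^sub>v stack m q u k = obs_mat p q A C *\<^sub>v x k"
proof (rule eq_vecI)
  show "dim_vec (stack p q y k - toep_mat p m q A B C D *\<^sub>v stack m q u k) = dim_vec (obs_mat p q A C *\<^sub>v x k)"
    using obs_carrier[OF A, of p q C] toep_carrier[of p m q A B C D] stack_carrier[of p q y k] by simp
  fix r assume "r < dim_vec (obs_mat p q A C *\<^sub>v x k)"
  hence r: "r < Suc q * p" using obs_carrier[OF A, of p q C] by simp
  define a where "a = r div p"
  define s where "s = r mod p"
  have p: "p > 0" using r by (cases p) auto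
  have sp: "s < p" using p by (simp add: s_def)
  have aq0: "a < Suc q" using r by (simp add: a_def less_mult_imp_div_less)
  hence aq: "a \<le> q" by simp
  have ub: "\<And>b. b \<le> q \<Longrightarrow> u (k + b) \<in> carrier_vec m" using uy by auto
  have tr: "x (k + a) = A ^\<^sub>m a *\<^sub>v x k + vsum n (\<lambda>l. A ^\<^sub>m (k + a - l - 1) *\<^sub>v (B *\<^sub>v u l)) {k..<k + a}"
    by (rule traj[where x=x and k=k, OF A B xk]) (use uy st aq in auto)
  have ya: "y (k + a) = C *\<^sub>v x (k + a) + D *\<^sub>v u (k + a)" using uy aq by auto
  have uS: "\<And>l. l \<in> {k..<k+a} \<Longrightarrow> A ^\<^sub>m (k + a - l - 1) *\<^sub>v (B *\<^sub>v u l) \<in> carrier_vec n"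
    using A by (auto intro: mv_carrier_row)
  have Cx: "(C *\<^sub>v x (k + a)) $ s = (C *\<^sub>v (A ^\<^sub>m a *\<^sub>v x k)) $ s
        + (\<Sum>b<a. (C * A ^\<^sub>m (a - b - 1) * B *\<^sub>v u (k + b)) $ s)"
  proof -
    have "C *\<^sub>v x (k + a) = C *\<^sub>v (A ^\<^sub>m a *\<^sub>v x k) + C *\<^sub>v vsum n (\<lambda>l. A ^\<^sub>m (k + a - l - 1) *\<^sub>v (B *\<^sub>v u l)) {k..<k + a}"
      unfolding tr by (rule mult_add_distrib_mat_vec[OF C]) (use A xk in \<open>auto intro: mv_carrier_row\<close>)
    also have "C *\<^sub>v vsum n (\<lambda>l. A ^\<^sub>m (k + a - l - 1) *\<^sub>v (B *\<^sub>v u l)) {k..<k + a}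
        = vsum p (\<lambda>l. C *\<^sub>v (A ^\<^sub>m (k + a - l - 1) *\<^sub>v (B *\<^sub>v u l))) {k..<k + a}"
      by (rule mult_vsum[OF C uS]) auto
    finally have e: "C *\<^sub>v x (k + a) = C *\<^sub>v (A ^\<^sub>m a *\<^sub>v x k) + vsum p (\<lambda>l. C *\<^sub>v (A ^\<^sub>m (k + a - l - 1) *\<^sub>v (B *\<^sub>v u l))) {k..<k + a}" .
    have "vsum p (\<lambda>l. C *\<^sub>v (A ^\<^sub>m (k + a - l - 1) *\<^sub>v (B *\<^sub>v u l))) {k..<k + a} $ s
        = (\<Sum>l\<in>{k..<k+a}. (C *\<^sub>v (A ^\<^sub>m (k + a - l - 1) *\<^sub>v (B *\<^sub>v u l))) $ s)"
      using sp by (simp add: vsum_def)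
    also have "\<dots> = (\<Sum>b<a. (C *\<^sub>v (A ^\<^sub>m (a - b - 1) *\<^sub>v (B *\<^sub>v u (k + b)))) $ s)"
      by (subst sum_shift_k) simp
    also have "\<dots> = (\<Sum>b<a. (C * A ^\<^sub>m (a - b - 1) * B *\<^sub>v u (k + b)) $ s)"
    proof (rule sum.cong[OF refl])
      fix b assume b: "b \<in> {..<a}"
      have u1: "u (k + b) \<in> carrier_vec m" using ub b aq by auto
      have "C * A ^\<^sub>m (a - b - 1) * B *\<^sub>v u (k + b) = C * A ^\<^sub>m (a - b - 1) *\<^sub>v (B *\<^sub>v u (k + b))"
        using A B C u1 by (intro assoc_mult_mat_vec) auto
      also have "\<dots> = C *\<^sub>v (A ^\<^sub>m (a - b - 1) *\<^sub>v (B *\<^sub>v u (k + b)))"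
        using A B C u1 by (intro assoc_mult_mat_vec) (auto intro: mv_carrier_row)
      finally show "(C *\<^sub>v (A ^\<^sub>m (a - b - 1) *\<^sub>v (B *\<^sub>v u (k + b)))) $ s = (C * A ^\<^sub>m (a - b - 1) * B *\<^sub>v u (k + b)) $ s"
        by simp
    qed
    finally show ?thesis unfolding e using sp C by (subst index_add_vec(1)) auto
  qed
  have "(stack p q y k - toep_mat p m q A B C D *\<^sub>v stack m q u k) $ r
      = y (k + a) $ s - (toep_mat p m q A B C D *\<^sub>v stack m q u k) $ r"
    using r toep_carrier[of p m q A B C D] by (simp add: stack_index a_def s_def)
  also have "\<dots> = (C *\<^sub>v (A ^\<^sub>m a *\<^sub>v x k)) $ s"
  proof -
    have T: "(toep_mat p m q A B C D *\<^sub>v stack m q u k) $ r = (D *\<^sub>v u (k + a)) $ s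
         + (\<Sum>b<a. (C * A ^\<^sub>m (a - b - 1) * B *\<^sub>v u (k + b)) $ s)"
      using toep_stack_index[where u=u and k=k, OF A B C D ub r] unfolding a_def s_def by simp
    show ?thesis unfolding T ya using Cx sp D C by simp
  qed
  also have "\<dots> = (obs_mat p q A C *\<^sub>v x k) $ r"
    unfolding obs_index[OF A C r xk] a_def s_def using A C xk
    by (subst assoc_mult_mat_vec[OF C pow_carrier_mat[OF A] xk]) rule
  finally show "(stack p q y k - toep_mat p m q A B C D *\<^sub>v stack m q u k) $ r = (obs_mat p q A C *\<^sub>v x k) $ r" .
qed


lemma TTi_v:
  fixes T Ti :: "real mat"
  assumes T: "T \<in> carrier_mat n n" and Ti: "Ti \<in> carrier_mat n n" and inv: "T * Ti = 1\<^sub>m n"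
    and v: "v \<in> carrier_vec n"
  shows "T *\<^sub>v (Ti *\<^sub>v v) = v"
  using assoc_mult_mat_vec[OF T Ti v, symmetric] inv v by simp

lemma hat_step:
  fixes A B C D T Ti :: "real mat"
  assumes A: "A \<in> carrier_mat n n" and B: "B \<in> carrier_mat n m" and C: "C \<in> carrier_mat p n"
    and T: "T \<in> carrier_mat n n" and Ti: "Ti \<in> carrier_mat n n" and inv: "T * Ti = 1\<^sub>m n"
    and xl: "xl \<in> carrier_vec n" and ul: "ul \<in> carrier_vec m"
  shows "Ti *\<^sub>v (A *\<^sub>v xl + B *\<^sub>v ul) = (Ti * A * T) *\<^sub>v (Ti *\<^sub>v xl) + (Ti * B) *\<^sub>v ul"
    and "C *\<^sub>v xl = (C * T) *\<^sub>v (Ti *\<^sub>v xl)"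
proof -
  have tx: "T *\<^sub>v (Ti *\<^sub>v xl) = xl" by (rule TTi_v[OF T Ti inv xl])
  have Tix: "Ti *\<^sub>v xl \<in> carrier_vec n" using Ti xl by simp
  have "(Ti * A * T) *\<^sub>v (Ti *\<^sub>v xl) = Ti *\<^sub>v (A *\<^sub>v (T *\<^sub>v (Ti *\<^sub>v xl)))"
    using Ti A T Tix by (simp add: assoc_mult_mat_vec[of _ n n _ n])
  also have "\<dots> = Ti *\<^sub>v (A *\<^sub>v xl)" using tx by simp
  finally have e1: "(Ti * A * T) *\<^sub>v (Ti *\<^sub>v xl) = Ti *\<^sub>v (A *\<^sub>v xl)" .
  have e2: "(Ti * B) *\<^sub>v ul = Ti *\<^sub>v (B *\<^sub>v ul)" using Ti B ul by simp
  show "Ti *\<^sub>v (A *\<^sub>v xl + B *\<^sub>v ul) = (Ti * A * T) *\<^sub>v (Ti *\<^sub>v xl) + (Ti * B) *\<^sub>v ul"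
    unfolding e1 e2 using A B xl ul Ti by (subst mult_add_distrib_mat_vec[OF Ti]) auto
  show "C *\<^sub>v xl = (C * T) *\<^sub>v (Ti *\<^sub>v xl)"
    using C T Tix tx by simp
qed

lemma mult_mat_of_cols:
  fixes M :: "real mat"
  assumes M: "M \<in> carrier_mat R n" and vs: "set vs \<subseteq> carrier_vec n"
  shows "M * mat_of_cols n vs = mat_of_cols R (map (\<lambda>v. M *\<^sub>v v) vs)"
proof (rule eq_matI)
  show "dim_row (M * mat_of_cols n vs) = dim_row (mat_of_cols R (map (\<lambda>v. M *\<^sub>v v) vs))" using M by simp
  show "dim_col (M * mat_of_cols n vs) = dim_col (mat_of_cols R (map (\<lambda>v. M *\<^sub>v v) vs))" by simp
  fix i j assume i: "i < dim_row (mat_of_cols R (map (\<lambda>v. M *\<^sub>v v) vs))"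
    and j: "j < dim_col (mat_of_cols R (map (\<lambda>v. M *\<^sub>v v) vs))"
  have i': "i < R" "j < length vs" using i j by auto
  have "col (mat_of_cols n vs) j = vs ! j" using i' vs by (intro col_mat_of_cols) auto
  then show "(M * mat_of_cols n vs) $$ (i, j) = mat_of_cols R (map (\<lambda>v. M *\<^sub>v v) vs) $$ (i, j)"
    using i' M by (simp add: mat_of_cols_index)
qed

lemma zvec_lemma:
  fixes Ah Bh Ch Dh :: "nat \<Rightarrow> real mat" and xh u y :: "nat \<Rightarrow> real vec"
  assumes A: "Ah mu \<in> carrier_mat n n" and B: "Bh mu \<in> carrier_mat n m" and C: "Ch mu \<in> carrier_mat p n"
    and D: "Dh mu \<in> carrier_mat p m" and mu: "phi (ks i) = mu" and K1: "ks i \<ge> 1"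
    and xk: "xh (ks i) \<in> carrier_vec n"
    and st: "\<And>l. ks i \<le> l \<Longrightarrow> l < ks i + q \<Longrightarrow> xh (Suc l) = Ah mu *\<^sub>v xh l + Bh mu *\<^sub>v u l"
    and uy: "\<And>l. ks i \<le> l \<Longrightarrow> l \<le> ks i + q \<Longrightarrow> u l \<in> carrier_vec m \<and> y l = Ch mu *\<^sub>v xh l + Dh mu *\<^sub>v u l"
  shows "Zvec p q Ah Bh Ch Dh phi u y ks i = obs_mat p q (Ah mu) (Ch mu) *\<^sub>v xh (ks i)"
proof (rule eq_vecI)
  show "dim_vec (Zvec p q Ah Bh Ch Dh phi u y ks i) = dim_vec (obs_mat p q (Ah mu) (Ch mu) *\<^sub>v xh (ks i))"
    using obs_carrier[OF A, of p q "Ch mu"] by (simp add: Zvec_def stack_def)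
  fix r assume "r < dim_vec (obs_mat p q (Ah mu) (Ch mu) *\<^sub>v xh (ks i))"
  hence r: "r < Suc q * p" using obs_carrier[OF A, of p q "Ch mu"] by simp
  define K where "K = ks i"
  define a where "a = r div p"
  define s where "s = r mod p"
  have p: "p > 0" using r by (cases p) auto
  have sp: "s < p" using p by (simp add: s_def)
  have aq0: "a < Suc q" using r by (simp add: a_def less_mult_imp_div_less)
  hence aq: "a \<le> q" by simp
  have tr: "xh (K + a) = Ah mu ^\<^sub>m a *\<^sub>v xh K + vsum n (\<lambda>l. Ah mu ^\<^sub>m (K + a - l - 1) *\<^sub>v (Bh mu *\<^sub>v u l)) {K..<K + a}"
    unfolding K_def by (rule traj[where x=xh and k="ks i", OF A B xk]) (use uy st aq in auto)
  have ya: "y (K + a) = Ch mu *\<^sub>v xh (K + a) + Dh mu *\<^sub>v u (K + a)" using uy aq K_def by auto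
  have ua: "u (K + a) \<in> carrier_vec m" using uy aq K_def by auto
  have uS: "\<And>l. l \<in> {K..<K+a} \<Longrightarrow> Ah mu ^\<^sub>m (K + a - l - 1) *\<^sub>v (Bh mu *\<^sub>v u l) \<in> carrier_vec n"
    using A by (auto intro: mv_carrier_row)
  have iv: "{K..K + a - 1} = {K..<K+a}" using K1 K_def by auto
  have CV: "Ch mu *\<^sub>v vsum n (\<lambda>l. Ah mu ^\<^sub>m (K + a - l - 1) *\<^sub>v (Bh mu *\<^sub>v u l)) {K..<K + a}
      = vsum p (\<lambda>l. Ch mu *\<^sub>v (Ah mu ^\<^sub>m (K + a - l - 1) *\<^sub>v (Bh mu *\<^sub>v u l))) {K..<K + a}"
    by (rule mult_vsum[OF C uS]) auto
  have Cx: "Ch mu *\<^sub>v xh (K + a) = Ch mu *\<^sub>v (Ah mu ^\<^sub>m a *\<^sub>v xh K)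
       + vsum p (\<lambda>l. Ch mu *\<^sub>v (Ah mu ^\<^sub>m (K + a - l - 1) *\<^sub>v (Bh mu *\<^sub>v u l))) {K..<K + a}"
    unfolding tr CV[symmetric] by (rule mult_add_distrib_mat_vec[OF C]) (use A xk K_def in \<open>auto intro: mv_carrier_row\<close>)
  have "Zvec p q Ah Bh Ch Dh phi u y ks i $ r = zeta p Ah Bh Ch Dh phi u y ks i (K + a) $ s"
    unfolding Zvec_def using r by (simp add: stack_index K_def a_def s_def)
  also have "zeta p Ah Bh Ch Dh phi u y ks i (K + a) = y (K+a) - Dh mu *\<^sub>v u (K+a)
      - vsum p (\<lambda>l. Ch mu *\<^sub>v (Ah mu ^\<^sub>m (K + a - l - 1) *\<^sub>v (Bh mu *\<^sub>v u l))) {K..<K+a}"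
    unfolding zeta_def Let_def mu K_def using iv[unfolded K_def] by simp
  also have "(y (K+a) - Dh mu *\<^sub>v u (K+a)
      - vsum p (\<lambda>l. Ch mu *\<^sub>v (Ah mu ^\<^sub>m (K + a - l - 1) *\<^sub>v (Bh mu *\<^sub>v u l))) {K..<K+a}) $ s
      = (Ch mu *\<^sub>v (Ah mu ^\<^sub>m a *\<^sub>v xh K)) $ s"
    unfolding ya Cx using sp C D ua by simp
  also have "\<dots> = (obs_mat p q (Ah mu) (Ch mu) *\<^sub>v xh (ks i)) $ r"
    unfolding obs_index[OF A C r xk] a_def s_def K_def using A C xk
    by (subst assoc_mult_mat_vec[OF C pow_carrier_mat[OF A] xk]) rule
  finally show "Zvec p q Ah Bh Ch Dh phi u y ks i $ r = (obs_mat p q (Ah mu) (Ch mu) *\<^sub>v xh (ks i)) $ r" .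
qed


lemma xhat_lemma:
  fixes Ah Bh Ch Dh :: "nat \<Rightarrow> real mat" and xh u y :: "nat \<Rightarrow> real vec"
  assumes A: "Ah nu \<in> carrier_mat n n" and B: "Bh nu \<in> carrier_mat n m" and C: "Ch nu \<in> carrier_mat p n"
    and D: "Dh nu \<in> carrier_mat p m" and nu: "phi K = nu"
    and xk: "xh K \<in> carrier_vec n"
    and st: "\<And>l. K \<le> l \<Longrightarrow> l < K + q \<Longrightarrow> xh (Suc l) = Ah nu *\<^sub>v xh l + Bh nu *\<^sub>v u l"
    and uy: "\<And>l. K \<le> l \<Longrightarrow> l \<le> K + q \<Longrightarrow> u l \<in> carrier_vec m \<and> y l = Ch nu *\<^sub>v xh l + Dh nu *\<^sub>v u l"
    and det: "det (transpose_mat (obs_mat p q (Ah nu) (Ch nu)) * obs_mat p q (Ah nu) (Ch nu)) \<noteq> 0"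
  shows "xhat p m q Ah Bh Ch Dh phi u y K = xh K"
proof -
  let ?O = "obs_mat p q (Ah nu) (Ch nu)"
  have O: "?O \<in> carrier_mat (Suc q * p) n" by (rule obs_carrier[OF A])
  have G: "transpose_mat ?O * ?O \<in> carrier_mat n n" using O by auto
  have PL: "pinv_left ?O \<in> carrier_mat n (Suc q * p)"
    unfolding pinv_left_def using minv_props(3)[OF G det] O by auto
  have bl: "stack p q y K - toep_mat p m q (Ah nu) (Bh nu) (Ch nu) (Dh nu) *\<^sub>v stack m q u K = ?O *\<^sub>v xh K"
    by (rule block[OF A B C D xk st uy])
  have "xhat p m q Ah Bh Ch Dh phi u y K = pinv_left ?O *\<^sub>v (?O *\<^sub>v xh K)"
    unfolding xhat_def nu bl ..
  also have "\<dots> = (pinv_left ?O * ?O) *\<^sub>v xh K" using assoc_mult_mat_vec[OF PL O xk] by simp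
  also have "\<dots> = xh K" using pinv_left_id[OF O det] xk by simp
  finally show ?thesis .
qed

lemma kappa_lemma:
  fixes Ah Bh Ch Dh :: "nat \<Rightarrow> real mat" and xh u y :: "nat \<Rightarrow> real vec"
  assumes A: "Ah nu \<in> carrier_mat n n" and B: "Bh nu \<in> carrier_mat n m"
    and nu: "phi (ks (i - 1)) = nu" and lt: "ks (i - 1) < ks i"
    and xk: "xh (ks (i - 1)) \<in> carrier_vec n"
    and xhat: "xhat p m q Ah Bh Ch Dh phi u y (ks (i - 1)) = xh (ks (i - 1))"
    and st: "\<And>l. ks (i - 1) \<le> l \<Longrightarrow> l < ks i \<Longrightarrow> u l \<in> carrier_vec m \<and> xh (Suc l) = Ah nu *\<^sub>v xh l + Bh nu *\<^sub>v u l"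
  shows "kappa n p m q Ah Bh Ch Dh phi u y ks i = xh (ks i)"
proof -
  define K0 where "K0 = ks (i - 1)"
  define a where "a = ks i - K0"
  have K1: "ks i = K0 + a" using lt by (simp add: a_def K0_def)
  have iv: "{K0..ks i - 1} = {K0..<K0+a}" using lt K1 by (auto simp: K0_def)
  have tr: "xh (K0 + a) = Ah nu ^\<^sub>m a *\<^sub>v xh K0 + vsum n (\<lambda>l. Ah nu ^\<^sub>m (K0 + a - l - 1) *\<^sub>v (Bh nu *\<^sub>v u l)) {K0..<K0 + a}"
    unfolding K0_def by (rule traj[where x=xh and k="ks (i - 1)", OF A B xk]) (use st K1 K0_def in auto)
  have nu': "phi K0 = nu" using nu K0_def by simp
  have xhat': "xhat p m q Ah Bh Ch Dh phi u y K0 = xh K0" using xhat K0_def by simp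
  have iv': "{K0..K0 + a - 1} = {K0..<K0+a}" using lt K1 by auto
  show ?thesis
    unfolding kappa_def Let_def K0_def[symmetric] K1 using nu' xhat' iv' tr by simp
qed


lemma assoc5:
  fixes PL Ob Nm P PR :: "real mat"
  assumes PL: "PL \<in> carrier_mat n R" and Ob: "Ob \<in> carrier_mat R n" and Nm: "Nm \<in> carrier_mat n n"
    and P: "P \<in> carrier_mat n c" and PR: "PR \<in> carrier_mat c n"
  shows "PL * (Ob * Nm * P) * PR = (PL * Ob) * Nm * (P * PR)"
proof -
  have 1: "Ob * Nm * P = Ob * (Nm * P)" by (rule assoc_mult_mat[OF Ob Nm P])
  have NP: "Nm * P \<in> carrier_mat n c" using Nm P by auto
  have POb: "PL * Ob \<in> carrier_mat n n" using PL Ob by auto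
  have 2: "PL * (Ob * (Nm * P)) = (PL * Ob) * (Nm * P)" by (rule assoc_mult_mat[OF PL Ob NP, symmetric])
  have 3: "(PL * Ob) * (Nm * P) * PR = (PL * Ob) * ((Nm * P) * PR)" by (rule assoc_mult_mat[OF POb NP PR])
  have 4: "(Nm * P) * PR = Nm * (P * PR)" by (rule assoc_mult_mat[OF Nm P PR])
  have PPR: "P * PR \<in> carrier_mat n n" using P PR by auto
  have 5: "(PL * Ob) * (Nm * (P * PR)) = (PL * Ob) * Nm * (P * PR)" by (rule assoc_mult_mat[OF POb Nm PPR, symmetric])
  show ?thesis unfolding 1 2 3 4 5 ..
qed

lemma ups_lemma:
  fixes Ah Bh Ch Dh :: "nat \<Rightarrow> real mat" and u y :: "nat \<Rightarrow> real vec" and Nm :: "real mat"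
    and ks phi :: "nat \<Rightarrow> nat" and istar t p :: nat
  defines "q \<equiv> dstar ks istar - 1"
  defines "Ob \<equiv> obs_mat p q (Ah (Suc t)) (Ch (Suc t))"
  assumes A: "Ah (Suc t) \<in> carrier_mat n n" and Nm: "Nm \<in> carrier_mat n n"
    and det: "det (transpose_mat Ob * Ob) \<noteq> 0"
    and rk: "vec_space.rank n (Psi_mat n p m Ah Bh Ch Dh phi u y ks istar t (Suc t)) = n"
    and kc: "\<And>i. i \<in> trans_idx phi ks istar t (Suc t) \<Longrightarrow> kappa n p m q Ah Bh Ch Dh phi u y ks i \<in> carrier_vec n"
    and zv: "\<And>i. i \<in> trans_idx phi ks istar t (Suc t) \<Longrightarrow>
        Zvec p q Ah Bh Ch Dh phi u y ks i = (Ob * Nm) *\<^sub>v kappa n p m q Ah Bh Ch Dh phi u y ks i"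
  shows "Ups_step n p m Ah Bh Ch Dh phi u y ks istar t = Nm"
proof -
  let ?L = "sorted_list_of_set (trans_idx phi ks istar t (Suc t))"
  let ?k = "kappa n p m q Ah Bh Ch Dh phi u y ks"
  let ?P = "Psi_mat n p m Ah Bh Ch Dh phi u y ks istar t (Suc t)"
  have fin: "finite (trans_idx phi ks istar t (Suc t))" unfolding trans_idx_def by auto
  have setL: "set ?L = trans_idx phi ks istar t (Suc t)" using fin by simp
  have Pd: "?P = mat_of_cols n (map ?k ?L)" unfolding Psi_mat_def q_def ..
  have P: "?P \<in> carrier_mat n (length ?L)" unfolding Pd
    by (rule mat_of_cols_carrier(1)[of n "map ?k ?L", unfolded length_map])
  have Ob: "Ob \<in> carrier_mat (Suc q * p) n" unfolding Ob_def by (rule obs_carrier[OF A])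
  have ON: "Ob * Nm \<in> carrier_mat (Suc q * p) n" using Ob Nm by auto
  have kset: "set (map ?k ?L) \<subseteq> carrier_vec n" using kc setL by auto
  have Z: "Zcal_mat p Ah Bh Ch Dh phi u y ks istar t (Suc t) = (Ob * Nm) * ?P"
  proof -
    have "Zcal_mat p Ah Bh Ch Dh phi u y ks istar t (Suc t)
        = mat_of_cols (Suc q * p) (map (Zvec p q Ah Bh Ch Dh phi u y ks) ?L)"
      unfolding Zcal_mat_def q_def ..
    also have "map (Zvec p q Ah Bh Ch Dh phi u y ks) ?L = map (\<lambda>v. (Ob * Nm) *\<^sub>v v) (map ?k ?L)"
      using zv setL by auto
    also have "mat_of_cols (Suc q * p) \<dots> = (Ob * Nm) * mat_of_cols n (map ?k ?L)"
      by (rule mult_mat_of_cols[OF ON kset, symmetric])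
    finally show ?thesis unfolding Pd .
  qed
  have dP: "det (?P * transpose_mat ?P) \<noteq> 0" by (rule gram_right_det[OF P rk])
  have PP: "?P * transpose_mat ?P \<in> carrier_mat n n" using P by auto
  have PR: "pinv_right ?P \<in> carrier_mat (length ?L) n"
    unfolding pinv_right_def using minv_props(3)[OF PP dP] P by auto
  have G: "transpose_mat Ob * Ob \<in> carrier_mat n n" using Ob by auto
  have PL: "pinv_left Ob \<in> carrier_mat n (Suc q * p)"
    unfolding pinv_left_def using minv_props(3)[OF G det] Ob by auto
  have "Ups_step n p m Ah Bh Ch Dh phi u y ks istar t = pinv_left Ob * ((Ob * Nm) * ?P) * pinv_right ?P"
    unfolding Ups_step_def Z Ob_def q_def ..
  also have "\<dots> = (pinv_left Ob * Ob) * Nm * (?P * pinv_right ?P)"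
    by (rule assoc5[OF PL Ob Nm P PR])
  also have "\<dots> = Nm" using pinv_left_id[OF Ob det] pinv_right_id[OF P dP] Nm by simp
  finally show ?thesis .
qed


lemma obs_hat_det:
  fixes A C T Ti :: "real mat"
  assumes A: "A \<in> carrier_mat n n" and C: "C \<in> carrier_mat p n" and T: "T \<in> carrier_mat n n"
    and Ti: "Ti \<in> carrier_mat n n" and inv: "T * Ti = 1\<^sub>m n"
    and rk: "vec_space.rank (n * p) (obs_mat p (n - 1) A C) = n" and n1: "n \<ge> 1" and q: "q \<ge> n - 1"
  shows "det (transpose_mat (obs_mat p q (Ti * A * T) (C * T)) * obs_mat p q (Ti * A * T) (C * T)) \<noteq> 0"
proof (rule gram_left_det)
  have Ah: "Ti * A * T \<in> carrier_mat n n" using Ti A T by auto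
  show "obs_mat p q (Ti * A * T) (C * T) \<in> carrier_mat (Suc q * p) n" by (rule obs_carrier[OF Ah])
  fix v :: "real vec" assume v: "v \<in> carrier_vec n"
    and Ov: "obs_mat p q (Ti * A * T) (C * T) *\<^sub>v v = 0\<^sub>v (Suc q * p)"
  define w where "w = T *\<^sub>v v"
  have w: "w \<in> carrier_vec n" using T v by (simp add: w_def)
  have O0: "obs_mat p (n - 1) A C \<in> carrier_mat (n * p) n" using obs_carrier[OF A, of p "n - 1" C] n1 by simp
  have key: "\<And>a. ((C * T) * (Ti * A * T) ^\<^sub>m a) *\<^sub>v v = (C * A ^\<^sub>m a) *\<^sub>v w"
  proof -
    fix a
    have Aa: "A ^\<^sub>m a \<in> carrier_mat n n" using A by simp
    have "(Ti * A * T) ^\<^sub>m a = Ti * A ^\<^sub>m a * T" by (rule pow_sim[OF A T Ti inv])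
    hence "((C * T) * (Ti * A * T) ^\<^sub>m a) *\<^sub>v v = ((C * T) * ((Ti * A ^\<^sub>m a) * T)) *\<^sub>v v" by simp
    also have "\<dots> = (C * T) *\<^sub>v (((Ti * A ^\<^sub>m a) * T) *\<^sub>v v)"
      by (rule assoc_mult_mat_vec[of _ p n]) (use C T Ti Aa v in auto)
    also have "((Ti * A ^\<^sub>m a) * T) *\<^sub>v v = (Ti * A ^\<^sub>m a) *\<^sub>v w"
      unfolding w_def by (rule assoc_mult_mat_vec[of _ n n]) (use T Ti Aa v in auto)
    also have "(Ti * A ^\<^sub>m a) *\<^sub>v w = Ti *\<^sub>v (A ^\<^sub>m a *\<^sub>v w)"
      by (rule assoc_mult_mat_vec[of _ n n]) (use Ti Aa w in auto)
    also have "(C * T) *\<^sub>v (Ti *\<^sub>v (A ^\<^sub>m a *\<^sub>v w)) = C *\<^sub>v (T *\<^sub>v (Ti *\<^sub>v (A ^\<^sub>m a *\<^sub>v w)))"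
      by (rule assoc_mult_mat_vec[of _ p n]) (use C T Ti Aa w in auto)
    also have "\<dots> = C *\<^sub>v (A ^\<^sub>m a *\<^sub>v w)" using TTi_v[OF T Ti inv] Aa w by simp
    also have "\<dots> = (C * A ^\<^sub>m a) *\<^sub>v w" using C Aa w by simp
    finally show "((C * T) * (Ti * A * T) ^\<^sub>m a) *\<^sub>v v = (C * A ^\<^sub>m a) *\<^sub>v w" .
  qed
  have "obs_mat p (n - 1) A C *\<^sub>v w = 0\<^sub>v (n * p)"
  proof (rule eq_vecI)
    show "dim_vec (obs_mat p (n - 1) A C *\<^sub>v w) = dim_vec (0\<^sub>v (n * p))" using O0 by simp
    fix r assume "r < dim_vec (0\<^sub>v (n * p) :: real vec)"
    hence r: "r < n * p" by simp
    have r0: "r < Suc (n - 1) * p" using r n1 by simp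
    have "Suc (n - 1) * p \<le> Suc q * p" using q by (intro mult_le_mono1) simp
    hence rq: "r < Suc q * p" using r0 by linarith
    have "(obs_mat p (n - 1) A C *\<^sub>v w) $ r = (C * A ^\<^sub>m (r div p) *\<^sub>v w) $ (r mod p)"
      by (rule obs_index[OF A C r0 w])
    also have "\<dots> = ((C * T) * (Ti * A * T) ^\<^sub>m (r div p) *\<^sub>v v) $ (r mod p)" using key by simp
    also have "\<dots> = (obs_mat p q (Ti * A * T) (C * T) *\<^sub>v v) $ r"
      by (rule obs_index[OF Ah _ rq v, symmetric]) (use C T in auto)
    also have "\<dots> = 0" using Ov rq by simp
    finally show "(obs_mat p (n - 1) A C *\<^sub>v w) $ r = 0\<^sub>v (n * p) $ r" using r by simp
  qed
  hence w0: "w = 0\<^sub>v n" by (rule vec_space.fullrank_kernel[OF O0 rk w])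
  have TiT: "Ti * T = 1\<^sub>m n" by (rule mat_mult_left_right_inverse[OF T Ti inv])
  have "v = (Ti * T) *\<^sub>v v" using TiT v by simp
  also have "\<dots> = Ti *\<^sub>v w" using Ti T v by (simp add: w_def)
  also have "\<dots> = 0\<^sub>v n" unfolding w0 using Ti by (intro eq_vecI) (auto simp: scalar_prod_def)
  finally show "v = 0\<^sub>v n" .
qed


lemma state_sim:
  fixes A B Ac Bc :: "nat \<Rightarrow> real mat" and S T1 :: "real mat"
  assumes S: "S \<in> carrier_mat n n" and T1: "T1 \<in> carrier_mat n n" and inv: "T1 * S = 1\<^sub>m n"
    and ph: "\<And>k. phi' k \<in> J" and AB: "\<And>j. j \<in> J \<Longrightarrow> A j \<in> carrier_mat n n \<and> B j \<in> carrier_mat n m"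
    and cs: "\<And>j. j \<in> J \<Longrightarrow> Ac j = S * A j * T1 \<and> Bc j = S * B j"
    and u: "\<And>k. u' k \<in> carrier_vec m" and x0: "x0 \<in> carrier_vec n"
  shows "lss_state Ac Bc phi' u' (S *\<^sub>v x0) k = S *\<^sub>v lss_state A B phi' u' x0 k
       \<and> lss_state A B phi' u' x0 k \<in> carrier_vec n"
proof (induction k)
  case 0 then show ?case using x0 by simp
next
  case (Suc k)
  let ?j = "phi' k"
  have j: "?j \<in> J" by (rule ph)
  have A: "A ?j \<in> carrier_mat n n" and B: "B ?j \<in> carrier_mat n m" using AB[OF j] by auto
  have xk: "lss_state A B phi' u' x0 k \<in> carrier_vec n" using Suc by simp
  have "lss_state Ac Bc phi' u' (S *\<^sub>v x0) (Suc k)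
      = (S * A ?j * T1) *\<^sub>v (S *\<^sub>v lss_state A B phi' u' x0 k) + (S * B ?j) *\<^sub>v u' k"
    using Suc cs[OF j] by simp
  also have "\<dots> = S *\<^sub>v (A ?j *\<^sub>v lss_state A B phi' u' x0 k + B ?j *\<^sub>v u' k)"
    by (rule hat_step(1)[OF A B _ T1 S inv xk u, symmetric, of "0\<^sub>m 0 n"]) auto
  finally show ?case using A B xk u by simp
qed

lemma foldl_sim:
  fixes A Ac :: "nat \<Rightarrow> real mat" and S T1 M :: "real mat"
  assumes S: "S \<in> carrier_mat n n" and T1: "T1 \<in> carrier_mat n n" and inv: "T1 * S = 1\<^sub>m n"
    and js: "set js \<subseteq> J" and AJ: "\<And>j. j \<in> J \<Longrightarrow> A j \<in> carrier_mat n n \<and> Ac j = S * A j * T1"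
    and M: "M \<in> carrier_mat n m"
  shows "foldl (\<lambda>M j. Ac j * M) (S * M) js = S * foldl (\<lambda>M j. A j * M) M js
       \<and> foldl (\<lambda>M j. A j * M) M js \<in> carrier_mat n m"
  using js M
proof (induction js arbitrary: M)
  case Nil then show ?case by simp
next
  case (Cons j js M)
  have j: "j \<in> J" using Cons by simp
  have A: "A j \<in> carrier_mat n n" and Ac: "Ac j = S * A j * T1" using AJ[OF j] by auto
  have M': "M \<in> carrier_mat n m" using Cons by simp
  have SA: "S * A j \<in> carrier_mat n n" using S A by auto
  have SM: "S * M \<in> carrier_mat n m" using S M' by auto
  have "Ac j * (S * M) = (S * A j) * (T1 * (S * M))" unfolding Ac by (rule assoc_mult_mat[OF SA T1 SM])
  also have "T1 * (S * M) = M" using assoc_mult_mat[OF T1 S M', symmetric] inv M' by simp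
  also have "(S * A j) * M = S * (A j * M)" by (rule assoc_mult_mat[OF S A M'])
  finally have e: "Ac j * (S * M) = S * (A j * M)" .
  have AM: "A j * M \<in> carrier_mat n m" using A M' by auto
  show ?case using Cons.IH[OF _ AM] Cons.prems e by simp
qed

lemma assoc4:
  fixes A B C D :: "real mat"
  assumes "A \<in> carrier_mat r n" "B \<in> carrier_mat n n" "C \<in> carrier_mat n n" "D \<in> carrier_mat n c"
  shows "(A * B) * (C * D) = A * ((B * C) * D)"
proof -
  have CD: "C * D \<in> carrier_mat n c" using assms by auto
  have "(A * B) * (C * D) = A * (B * (C * D))" by (rule assoc_mult_mat[OF assms(1,2) CD])
  also have "B * (C * D) = (B * C) * D" by (rule assoc_mult_mat[OF assms(2,3,4), symmetric])
  finally show ?thesis .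
qed

lemma cancel_mid:
  fixes A B C D :: "real mat"
  assumes "A \<in> carrier_mat r n" "B \<in> carrier_mat n n" "C \<in> carrier_mat n n" "D \<in> carrier_mat n c"
    and "B * C = 1\<^sub>m n"
  shows "(A * B) * (C * D) = A * D"
  using assoc4[OF assms(1-4)] assms by simp

theorem theorem3:
  fixes n m p sigma N istar :: nat
    and A B C D T Ah Bh Ch Dh :: "nat \<Rightarrow> real mat"
    and phi ks :: "nat \<Rightarrow> nat"
    and u y :: "nat \<Rightarrow> real vec"
  assumes n2: "n \<ge> 2"
    and dims: "\<And>j. j \<in> {1..sigma} \<Longrightarrow> A j \<in> carrier_mat n n \<and> B j \<in> carrier_mat n m
                  \<and> C j \<in> carrier_mat p n \<and> D j \<in> carrier_mat p m"
    and minimal: "\<And>j. j \<in> {1..sigma} \<Longrightarrow> minimal_sys n m p (A j) (B j) (C j)"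
    and A_inv: "\<And>j. j \<in> {1..sigma} \<Longrightarrow> invertible_mat (A j)"
    and bibo: "\<And>j. j \<in> {1..sigma} \<Longrightarrow> bibo_stable n m p (A j) (B j) (C j) (D j)"
    and T_props: "\<And>j. j \<in> {1..sigma} \<Longrightarrow> T j \<in> carrier_mat n n \<and> invertible_mat (T j)"
    and est: "\<And>j. j \<in> {1..sigma} \<Longrightarrow>
               Ah j = minv (T j) * A j * T j \<and> Bh j = minv (T j) * B j
               \<and> Ch j = C j * T j \<and> Dh j = D j"
    and phi_range: "phi ` {1..N} = {1..sigma}"
    and u_dim: "\<And>k. k \<in> {1..N} \<Longrightarrow> u k \<in> carrier_vec m"
    and data: "\<exists>x. \<forall>k \<in> {1..N}. x k \<in> carrier_vec n
                  \<and> x (Suc k) = A (phi k) *\<^sub>v x k + B (phi k) *\<^sub>v u k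
                  \<and> y k = C (phi k) *\<^sub>v x k + D (phi k) *\<^sub>v u k"
    and ks0: "ks 0 = 1"
    and ksN: "ks (Suc istar) = N"
    and ks_mono: "\<And>i. i \<le> istar \<Longrightarrow> ks i < ks (Suc i)"
    and ks_const: "\<And>i k. i \<le> istar \<Longrightarrow> ks i \<le> k \<Longrightarrow> k < ks (Suc i) \<Longrightarrow> phi k = phi (ks i)"
    and ks_switch: "\<And>i. i \<in> {1..istar} \<Longrightarrow> phi (ks i) \<noteq> phi (ks (i - 1))"
    and dwell: "dstar ks istar \<ge> n"
    and rank_Psi: "\<And>t. t \<in> {1..sigma - 1} \<Longrightarrow>
        vec_space.rank n (Psi_mat n p m Ah Bh Ch Dh phi u y ks istar t (Suc t)) = n"
  shows "(\<forall>mu \<in> {1..sigma}.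
            Ups_chain n (Ups_step n p m Ah Bh Ch Dh phi u y ks istar) mu = minv (T 1) * T mu)
       \<and> (let U = Ups_chain n (Ups_step n p m Ah Bh Ch Dh phi u y ks istar);
              Ac = (\<lambda>mu. U mu * Ah mu * minv (U mu));
              Bc = (\<lambda>mu. U mu * Bh mu);
              Cc = (\<lambda>mu. Ch mu * minv (U mu));
              Dc = (\<lambda>mu. Dh mu)
          in (\<forall>phi' u' x0. (\<forall>k. phi' k \<in> {1..sigma}) \<longrightarrow> (\<forall>k. u' k \<in> carrier_vec m)
                 \<longrightarrow> x0 \<in> carrier_vec n \<longrightarrow>
                 (\<forall>k. lss_output Ac Bc Cc Dc phi' u' (minv (T 1) *\<^sub>v x0) k
                      = lss_output A B C D phi' u' x0 k))
           \<and> (\<forall>w. w \<noteq> [] \<longrightarrow> set w \<subseteq> {1..sigma} \<longrightarrow>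
                 markov Ac Bc Cc Dc w = markov A B C D w))"
  proof -
  obtain x where X: "\<forall>k \<in> {1..N}. x k \<in> carrier_vec n
                  \<and> x (Suc k) = A (phi k) *\<^sub>v x k + B (phi k) *\<^sub>v u k
                  \<and> y k = C (phi k) *\<^sub>v x k + D (phi k) *\<^sub>v u k" using data by blast
  define ds where "ds = dstar ks istar"
  define q where "q = ds - 1"
  have ds2: "ds \<ge> 2" using dwell n2 ds_def by simp
  have gap: "\<And>i. i \<le> istar \<Longrightarrow> ks i + ds \<le> ks (Suc i)"
  proof -
    fix i assume i: "i \<le> istar"
    have "ds \<le> ks (Suc i) - ks i" unfolding ds_def dstar_def using i by (intro Min_le) auto
    thus "ks i + ds \<le> ks (Suc i)" using ks_mono[OF i] by simp
  qed
  have mono: "\<And>j i. i \<le> j \<Longrightarrow> j \<le> Suc istar \<Longrightarrow> ks i \<le> ks j"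
  proof -
    fix j i show "i \<le> j \<Longrightarrow> j \<le> Suc istar \<Longrightarrow> ks i \<le> ks j"
    proof (induction j)
      case 0 then show ?case by simp
    next
      case (Suc j)
      show ?case
      proof (cases "i = Suc j")
        case True then show ?thesis by simp
      next
        case False
        hence "ks i \<le> ks j" using Suc by simp
        also have "ks j < ks (Suc j)" using Suc.prems by (intro ks_mono) simp
        finally show ?thesis by simp
      qed
    qed
  qed
  have ks_rng: "\<And>i. i \<le> Suc istar \<Longrightarrow> 1 \<le> ks i \<and> ks i \<le> N"
  proof -
    fix i assume i: "i \<le> Suc istar"
    have "ks 0 \<le> ks i" by (rule mono) (use i in auto)
    moreover have "ks i \<le> ks (Suc istar)" by (rule mono) (use i in auto)
    ultimately show "1 \<le> ks i \<and> ks i \<le> N" using ks0 ksN by simp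
  qed
  have SEG: "\<And>i l. i \<le> istar \<Longrightarrow> ks i \<le> l \<Longrightarrow> l < ks (Suc i) \<Longrightarrow>
       l \<in> {1..N} \<and> phi l = phi (ks i) \<and> phi (ks i) \<in> {1..sigma}"
  proof -
    fix i l assume i: "i \<le> istar" and l: "ks i \<le> l" "l < ks (Suc i)"
    have r1: "1 \<le> ks i" "ks (Suc i) \<le> N" using ks_rng[of i] ks_rng[of "Suc i"] i by auto
    have "ks i \<in> {1..N}" using r1 ks_mono[OF i] by auto
    hence "phi (ks i) \<in> {1..sigma}" using phi_range by blast
    thus "l \<in> {1..N} \<and> phi l = phi (ks i) \<and> phi (ks i) \<in> {1..sigma}"
      using r1 l ks_const[OF i l] by auto
  qed
  have TT: "\<And>j. j \<in> {1..sigma} \<Longrightarrow> T j * minv (T j) = 1\<^sub>m n \<and> minv (T j) * T j = 1\<^sub>m n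
       \<and> minv (T j) \<in> carrier_mat n n \<and> T j \<in> carrier_mat n n"
  proof -
    fix j assume j: "j \<in> {1..sigma}"
    have Tj: "T j \<in> carrier_mat n n" and iv: "invertible_mat (T j)" using T_props[OF j] by auto
    have d: "det (T j) \<noteq> 0" by (rule invertible_det[OF Tj iv])
    show "T j * minv (T j) = 1\<^sub>m n \<and> minv (T j) * T j = 1\<^sub>m n \<and> minv (T j) \<in> carrier_mat n n \<and> T j \<in> carrier_mat n n"
      using minv_props[OF Tj d] Tj by auto
  qed
  have HD: "\<And>j. j \<in> {1..sigma} \<Longrightarrow> Ah j \<in> carrier_mat n n \<and> Bh j \<in> carrier_mat n m
       \<and> Ch j \<in> carrier_mat p n \<and> Dh j \<in> carrier_mat p m"
  proof -
    fix j assume j: "j \<in> {1..sigma}"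
    show "Ah j \<in> carrier_mat n n \<and> Bh j \<in> carrier_mat n m \<and> Ch j \<in> carrier_mat p n \<and> Dh j \<in> carrier_mat p m"
      using est[OF j] dims[OF j] TT[OF j] by auto
  qed
  have OD: "\<And>j. j \<in> {1..sigma} \<Longrightarrow>
      det (transpose_mat (obs_mat p q (Ah j) (Ch j)) * obs_mat p q (Ah j) (Ch j)) \<noteq> 0"
  proof -
    fix j assume j: "j \<in> {1..sigma}"
    have rk: "vec_space.rank (n * p) (obs_mat p (n - 1) (A j) (C j)) = n"
      using minimal[OF j] unfolding minimal_sys_def by simp
    have q: "q \<ge> n - 1" using dwell unfolding q_def ds_def by simp
    show "det (transpose_mat (obs_mat p q (Ah j) (Ch j)) * obs_mat p q (Ah j) (Ch j)) \<noteq> 0"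
      using obs_hat_det[of "A j" n "C j" p "T j" "minv (T j)" q] dims[OF j] TT[OF j] est[OF j] rk n2 q by auto
  qed
  have HAT: "\<And>j l. j \<in> {1..sigma} \<Longrightarrow> l \<in> {1..N} \<Longrightarrow> phi l = j \<Longrightarrow>
      u l \<in> carrier_vec m \<and> x l \<in> carrier_vec n \<and> minv (T j) *\<^sub>v x l \<in> carrier_vec n
      \<and> minv (T j) *\<^sub>v x (Suc l) = Ah j *\<^sub>v (minv (T j) *\<^sub>v x l) + Bh j *\<^sub>v u l
      \<and> y l = Ch j *\<^sub>v (minv (T j) *\<^sub>v x l) + Dh j *\<^sub>v u l"
  proof -
    fix j l assume j: "j \<in> {1..sigma}" and l: "l \<in> {1..N}" and pl: "phi l = j"
    have xl: "x l \<in> carrier_vec n" and xs: "x (Suc l) = A j *\<^sub>v x l + B j *\<^sub>v u l"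
      and yl: "y l = C j *\<^sub>v x l + D j *\<^sub>v u l" using X l pl by auto
    have ul: "u l \<in> carrier_vec m" by (rule u_dim[OF l])
    have Aj: "A j \<in> carrier_mat n n" and Bj: "B j \<in> carrier_mat n m" and Cj: "C j \<in> carrier_mat p n"
      using dims[OF j] by auto
    have Tj: "T j \<in> carrier_mat n n" and Tij: "minv (T j) \<in> carrier_mat n n" and inv: "T j * minv (T j) = 1\<^sub>m n"
      using TT[OF j] by auto
    note h = hat_step[OF Aj Bj Cj Tj Tij inv xl ul]
    show "u l \<in> carrier_vec m \<and> x l \<in> carrier_vec n \<and> minv (T j) *\<^sub>v x l \<in> carrier_vec n
      \<and> minv (T j) *\<^sub>v x (Suc l) = Ah j *\<^sub>v (minv (T j) *\<^sub>v x l) + Bh j *\<^sub>v u l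
      \<and> y l = Ch j *\<^sub>v (minv (T j) *\<^sub>v x l) + Dh j *\<^sub>v u l"
      using h est[OF j] xs yl ul xl Tij by auto
  qed
  have STEP: "\<And>t. t \<in> {1..sigma - 1} \<Longrightarrow> Ups_step n p m Ah Bh Ch Dh phi u y ks istar t = minv (T (Suc t)) * T t"
  proof -
    fix t assume t: "t \<in> {1..sigma - 1}"
    have tS: "t \<in> {1..sigma}" and tS': "Suc t \<in> {1..sigma}" using t by auto
    let ?Nm = "minv (T (Suc t)) * T t"
    let ?O = "obs_mat p q (Ah (Suc t)) (Ch (Suc t))"
    have Nm: "?Nm \<in> carrier_mat n n" using TT[OF tS] TT[OF tS'] by auto
    have AS: "Ah (Suc t) \<in> carrier_mat n n" using HD[OF tS'] by auto
    have KZ: "\<And>i. i \<in> trans_idx phi ks istar t (Suc t) \<Longrightarrow>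
        kappa n p m q Ah Bh Ch Dh phi u y ks i = minv (T t) *\<^sub>v x (ks i)
        \<and> Zvec p q Ah Bh Ch Dh phi u y ks i = ?O *\<^sub>v (minv (T (Suc t)) *\<^sub>v x (ks i))
        \<and> x (ks i) \<in> carrier_vec n"
    proof -
      fix i assume i: "i \<in> trans_idx phi ks istar t (Suc t)"
      have i1: "1 \<le> i" "i \<le> istar" and pnu: "phi (ks (i - 1)) = t" and pmu: "phi (ks i) = Suc t"
        using i unfolding trans_idx_def by auto
      have im: "i - 1 \<le> istar" and si: "Suc (i - 1) = i" using i1 by auto
      have g0: "ks (i - 1) + ds \<le> ks i" using gap[OF im] si by simp
      have g1: "ks i + ds \<le> ks (Suc i)" using gap[OF i1(2)] .
      have qd: "q < ds" unfolding q_def using ds2 by simp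
      have seg0: "\<And>l. ks (i - 1) \<le> l \<Longrightarrow> l < ks i \<Longrightarrow> l \<in> {1..N} \<and> phi l = t"
      proof -
        fix l assume l: "ks (i - 1) \<le> l" "l < ks i"
        hence l2: "l < ks (Suc (i - 1))" using si by simp
        show "l \<in> {1..N} \<and> phi l = t" using SEG[OF im l(1) l2] pnu by simp
      qed
      have seg1: "\<And>l. ks i \<le> l \<Longrightarrow> l < ks (Suc i) \<Longrightarrow> l \<in> {1..N} \<and> phi l = Suc t"
      proof -
        fix l assume l: "ks i \<le> l" "l < ks (Suc i)"
        show "l \<in> {1..N} \<and> phi l = Suc t" using SEG[OF i1(2) l] pmu by simp
      qed
      have hat0: "\<And>l. ks (i - 1) \<le> l \<Longrightarrow> l < ks i \<Longrightarrow>
          u l \<in> carrier_vec m \<and> x l \<in> carrier_vec n \<and> minv (T t) *\<^sub>v x l \<in> carrier_vec n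
          \<and> minv (T t) *\<^sub>v x (Suc l) = Ah t *\<^sub>v (minv (T t) *\<^sub>v x l) + Bh t *\<^sub>v u l
          \<and> y l = Ch t *\<^sub>v (minv (T t) *\<^sub>v x l) + Dh t *\<^sub>v u l"
        using HAT[OF tS] seg0 by blast
      have hat1: "\<And>l. ks i \<le> l \<Longrightarrow> l < ks (Suc i) \<Longrightarrow>
          u l \<in> carrier_vec m \<and> x l \<in> carrier_vec n \<and> minv (T (Suc t)) *\<^sub>v x l \<in> carrier_vec n
          \<and> minv (T (Suc t)) *\<^sub>v x (Suc l) = Ah (Suc t) *\<^sub>v (minv (T (Suc t)) *\<^sub>v x l) + Bh (Suc t) *\<^sub>v u l
          \<and> y l = Ch (Suc t) *\<^sub>v (minv (T (Suc t)) *\<^sub>v x l) + Dh (Suc t) *\<^sub>v u l"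
        using HAT[OF tS'] seg1 by blast
      have lt0: "ks (i - 1) < ks i" using g0 ds2 by simp
      have lt1: "ks i < ks (Suc i)" using g1 ds2 by simp
      have xk0: "minv (T t) *\<^sub>v x (ks (i - 1)) \<in> carrier_vec n" using hat0[of "ks (i - 1)"] lt0 by simp
      have xki: "x (ks i) \<in> carrier_vec n" and xk1: "minv (T (Suc t)) *\<^sub>v x (ks i) \<in> carrier_vec n"
        using hat1[of "ks i"] lt1 by auto
      have HDt: "Ah t \<in> carrier_mat n n" "Bh t \<in> carrier_mat n m" "Ch t \<in> carrier_mat p n" "Dh t \<in> carrier_mat p m"
        using HD[OF tS] by auto
      have HDs: "Ah (Suc t) \<in> carrier_mat n n" "Bh (Suc t) \<in> carrier_mat n m" "Ch (Suc t) \<in> carrier_mat p n" "Dh (Suc t) \<in> carrier_mat p m"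
        using HD[OF tS'] by auto
      have xh: "xhat p m q Ah Bh Ch Dh phi u y (ks (i - 1)) = minv (T t) *\<^sub>v x (ks (i - 1))"
        by (rule xhat_lemma[where xh="\<lambda>l. minv (T t) *\<^sub>v x l" and Ah=Ah and Bh=Bh and Ch=Ch and Dh=Dh and nu=t
             and phi=phi and K="ks (i - 1)" and u=u and y=y and q=q and p=p and m=m and n=n, OF HDt pnu xk0 _ _ OD[OF tS]])
           (use hat0 g0 qd in auto)
      have ka: "kappa n p m q Ah Bh Ch Dh phi u y ks i = minv (T t) *\<^sub>v x (ks i)"
        by (rule kappa_lemma[where xh="\<lambda>l. minv (T t) *\<^sub>v x l" and Ah=Ah and Bh=Bh and Ch=Ch and Dh=Dh and nu=t
             and phi=phi and ks=ks and i=i and u=u and y=y and q=q and p=p and m=m and n=n, OF HDt(1,2) pnu lt0 xk0 xh])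
           (use hat0 in auto)
      have k1: "1 \<le> ks i" using ks_rng[of i] i1 by simp
      have zv: "Zvec p q Ah Bh Ch Dh phi u y ks i = ?O *\<^sub>v (minv (T (Suc t)) *\<^sub>v x (ks i))"
        by (rule zvec_lemma[where xh="\<lambda>l. minv (T (Suc t)) *\<^sub>v x l" and Ah=Ah and Bh=Bh and Ch=Ch and Dh=Dh and mu="Suc t"
             and phi=phi and ks=ks and i=i and u=u and y=y and q=q and p=p and m=m and n=n, OF HDs pmu k1 xk1])
           (use hat1 g1 qd in auto)
      show "kappa n p m q Ah Bh Ch Dh phi u y ks i = minv (T t) *\<^sub>v x (ks i)
        \<and> Zvec p q Ah Bh Ch Dh phi u y ks i = ?O *\<^sub>v (minv (T (Suc t)) *\<^sub>v x (ks i))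
        \<and> x (ks i) \<in> carrier_vec n" using ka zv xki by simp
    qed
    show "Ups_step n p m Ah Bh Ch Dh phi u y ks istar t = ?Nm"
    proof (rule ups_lemma[where Ah=Ah and Bh=Bh and Ch=Ch and Dh=Dh and t=t and phi=phi and ks=ks and istar=istar
        and u=u and y=y and p=p and m=m and n=n, OF AS Nm])
      show "det (transpose_mat (obs_mat p (dstar ks istar - 1) (Ah (Suc t)) (Ch (Suc t))) *
            obs_mat p (dstar ks istar - 1) (Ah (Suc t)) (Ch (Suc t))) \<noteq> 0"
        using OD[OF tS'] unfolding q_def ds_def .
      show "vec_space.rank n (Psi_mat n p m Ah Bh Ch Dh phi u y ks istar t (Suc t)) = n"
        by (rule rank_Psi[OF t])
      fix i assume i: "i \<in> trans_idx phi ks istar t (Suc t)"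
      note kz = KZ[OF i, unfolded q_def ds_def]
      have Tt: "T t \<in> carrier_mat n n" "minv (T t) \<in> carrier_mat n n" "T t * minv (T t) = 1\<^sub>m n"
        using TT[OF tS] by auto
      have Ts: "minv (T (Suc t)) \<in> carrier_mat n n" using TT[OF tS'] by auto
      have xki: "x (ks i) \<in> carrier_vec n" using kz by simp
      show "kappa n p m (dstar ks istar - 1) Ah Bh Ch Dh phi u y ks i \<in> carrier_vec n"
        using kz Tt xki by simp
      have O: "obs_mat p (dstar ks istar - 1) (Ah (Suc t)) (Ch (Suc t)) \<in> carrier_mat (Suc (dstar ks istar - 1) * p) n"
        by (rule obs_carrier[OF AS])
      have "(obs_mat p (dstar ks istar - 1) (Ah (Suc t)) (Ch (Suc t)) * ?Nm) *\<^sub>v (minv (T t) *\<^sub>v x (ks i))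
          = obs_mat p (dstar ks istar - 1) (Ah (Suc t)) (Ch (Suc t)) *\<^sub>v (?Nm *\<^sub>v (minv (T t) *\<^sub>v x (ks i)))"
        by (rule assoc_mult_mat_vec[OF O Nm]) (use Tt xki in simp)
      also have "?Nm *\<^sub>v (minv (T t) *\<^sub>v x (ks i)) = minv (T (Suc t)) *\<^sub>v (T t *\<^sub>v (minv (T t) *\<^sub>v x (ks i)))"
        by (rule assoc_mult_mat_vec[OF Ts Tt(1)]) (use Tt xki in simp)
      also have "T t *\<^sub>v (minv (T t) *\<^sub>v x (ks i)) = x (ks i)" by (rule TTi_v[OF Tt xki])
      finally show "Zvec p (dstar ks istar - 1) Ah Bh Ch Dh phi u y ks i =
          (obs_mat p (dstar ks istar - 1) (Ah (Suc t)) (Ch (Suc t)) * ?Nm) *\<^sub>v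
          kappa n p m (dstar ks istar - 1) Ah Bh Ch Dh phi u y ks i"
        using kz by simp
    qed
  qed
  have N1: "1 \<in> {1..N}" using ks_rng[of "Suc istar"] ksN by simp
  have "phi 1 \<in> {1..sigma}" using imageI[OF N1, of phi] unfolding phi_range .
  hence s1: "1 \<in> {1..sigma}" by simp
  let ?U = "Ups_chain n (Ups_step n p m Ah Bh Ch Dh phi u y ks istar)"
  have P1': "\<And>mu. 1 \<le> mu \<Longrightarrow> mu \<le> sigma \<Longrightarrow> ?U mu = minv (T 1) * T mu"
  proof -
    fix mu show "1 \<le> mu \<Longrightarrow> mu \<le> sigma \<Longrightarrow> ?U mu = minv (T 1) * T mu"
    proof (induction mu)
      case 0 then show ?case by simp
    next
      case (Suc mu)
      show ?case
      proof (cases "mu = 0")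
        case True
        then show ?thesis using TT[OF s1] by (simp add: Ups_chain_def)
      next
        case False
        hence m1: "1 \<le> mu" by simp
        have mS: "mu \<in> {1..sigma}" "Suc mu \<in> {1..sigma}" using m1 Suc.prems by auto
        have mt: "mu \<in> {1..sigma - 1}" using m1 Suc.prems by auto
        have IH: "?U mu = minv (T 1) * T mu" using Suc.IH m1 Suc.prems by simp
        have ch: "?U (Suc mu) = ?U mu * minv (Ups_step n p m Ah Bh Ch Dh phi u y ks istar mu)"
          unfolding Ups_chain_def using m1 by simp
        have T1: "minv (T 1) \<in> carrier_mat n n" using TT[OF s1] by auto
        have Tm: "T mu \<in> carrier_mat n n" "minv (T mu) \<in> carrier_mat n n" "T mu * minv (T mu) = 1\<^sub>m n"
          "minv (T mu) * T mu = 1\<^sub>m n" using TT[OF mS(1)] by auto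
        have Ts: "T (Suc mu) \<in> carrier_mat n n" "minv (T (Suc mu)) \<in> carrier_mat n n"
          "T (Suc mu) * minv (T (Suc mu)) = 1\<^sub>m n" "minv (T (Suc mu)) * T (Suc mu) = 1\<^sub>m n"
          using TT[OF mS(2)] by auto
        have inv: "minv (minv (T (Suc mu)) * T mu) = minv (T mu) * T (Suc mu)"
        proof (rule minv_unique)
          show "minv (T (Suc mu)) * T mu * (minv (T mu) * T (Suc mu)) = 1\<^sub>m n"
            using cancel_mid[OF Ts(2) Tm(1) Tm(2) Ts(1) Tm(3)] Ts(4) by simp
        qed (use Tm Ts in auto)
        show ?thesis unfolding ch IH STEP[OF mt] inv
          by (rule cancel_mid) (use T1 Tm Ts in auto)
      qed
    qed
  qed
  have P1: "\<forall>mu \<in> {1..sigma}. ?U mu = minv (T 1) * T mu" using P1' by auto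
  define S where "S = minv (T 1)"
  have S: "S \<in> carrier_mat n n" "T 1 \<in> carrier_mat n n" "T 1 * S = 1\<^sub>m n" "S * T 1 = 1\<^sub>m n"
    using TT[OF s1] unfolding S_def by auto
  have UA: "\<And>mu. mu \<in> {1..sigma} \<Longrightarrow> ?U mu * Ah mu * minv (?U mu) = S * A mu * T 1
      \<and> ?U mu * Bh mu = S * B mu \<and> Ch mu * minv (?U mu) = C mu * T 1 \<and> Dh mu = D mu"
  proof -
    fix mu assume mu: "mu \<in> {1..sigma}"
    have Tm: "T mu \<in> carrier_mat n n" "minv (T mu) \<in> carrier_mat n n" "T mu * minv (T mu) = 1\<^sub>m n"
      "minv (T mu) * T mu = 1\<^sub>m n" using TT[OF mu] by auto
    have Am: "A mu \<in> carrier_mat n n" "B mu \<in> carrier_mat n m" "C mu \<in> carrier_mat p n"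
      using dims[OF mu] by auto
    have U: "?U mu = S * T mu" using P1 mu unfolding S_def by auto
    have Ui: "minv (?U mu) = minv (T mu) * T 1"
    proof (rule minv_unique)
      show "?U mu \<in> carrier_mat n n" unfolding U using S Tm by auto
      show "minv (T mu) * T 1 \<in> carrier_mat n n" using S Tm by auto
      show "?U mu * (minv (T mu) * T 1) = 1\<^sub>m n" unfolding U
        using cancel_mid[OF S(1) Tm(1) Tm(2) S(2) Tm(3)] S(4) by simp
    qed
    have Ui': "minv (S * T mu) = minv (T mu) * T 1" using Ui U by simp
    have AT: "A mu * T mu \<in> carrier_mat n n" using Am Tm by auto
    have SA: "S * A mu \<in> carrier_mat n n" using Am S by auto
    have e1: "minv (T mu) * A mu * T mu = minv (T mu) * (A mu * T mu)"
      by (rule assoc_mult_mat[OF Tm(2) Am(1) Tm(1)])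
    have "?U mu * Ah mu * minv (?U mu) = ((S * T mu) * (minv (T mu) * (A mu * T mu))) * (minv (T mu) * T 1)"
      unfolding U Ui' est[OF mu, THEN conjunct1] e1 ..
    also have "(S * T mu) * (minv (T mu) * (A mu * T mu)) = S * (A mu * T mu)"
      by (rule cancel_mid[OF S(1) Tm(1) Tm(2) AT Tm(3)])
    also have "S * (A mu * T mu) = (S * A mu) * T mu" by (rule assoc_mult_mat[OF S(1) Am(1) Tm(1), symmetric])
    also have "(S * A mu) * T mu * (minv (T mu) * T 1) = S * A mu * T 1"
      by (rule cancel_mid[OF SA Tm(1) Tm(2) S(2) Tm(3)])
    finally have r1: "?U mu * Ah mu * minv (?U mu) = S * A mu * T 1" .
    have r2: "?U mu * Bh mu = S * B mu" unfolding U est[OF mu, THEN conjunct2, THEN conjunct1]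
      by (rule cancel_mid[OF S(1) Tm(1) Tm(2) Am(2) Tm(3)])
    have r3: "Ch mu * minv (?U mu) = C mu * T 1" unfolding Ui est[OF mu, THEN conjunct2, THEN conjunct2, THEN conjunct1]
      by (rule cancel_mid[OF Am(3) Tm(1) Tm(2) S(2) Tm(3)])
    show "?U mu * Ah mu * minv (?U mu) = S * A mu * T 1
      \<and> ?U mu * Bh mu = S * B mu \<and> Ch mu * minv (?U mu) = C mu * T 1 \<and> Dh mu = D mu"
      using r1 r2 r3 est[OF mu] by simp
  qed
  show ?thesis unfolding Let_def
  proof (intro conjI allI impI)
    show "\<forall>mu \<in> {1..sigma}. ?U mu = minv (T 1) * T mu" by (rule P1)
  next
    fix phi' :: "nat \<Rightarrow> nat" and u' :: "nat \<Rightarrow> real vec" and x0 :: "real vec" and k :: nat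
    assume ph: "\<forall>k. phi' k \<in> {1..sigma}" and uc: "\<forall>k. u' k \<in> carrier_vec m" and x0: "x0 \<in> carrier_vec n"
    let ?Ac = "\<lambda>mu. ?U mu * Ah mu * minv (?U mu)"
    let ?Bc = "\<lambda>mu. ?U mu * Bh mu"
    have st: "lss_state ?Ac ?Bc phi' u' (S *\<^sub>v x0) k = S *\<^sub>v lss_state A B phi' u' x0 k
       \<and> lss_state A B phi' u' x0 k \<in> carrier_vec n"
      by (rule state_sim[OF S(1) S(2) S(3), where J="{1..sigma}"]) (use ph dims UA uc x0 in auto)
    have j: "phi' k \<in> {1..sigma}" using ph by auto
    have Am: "A (phi' k) \<in> carrier_mat n n" "B (phi' k) \<in> carrier_mat n m" "C (phi' k) \<in> carrier_mat p n"
      using dims[OF j] by auto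
    have xk: "lss_state A B phi' u' x0 k \<in> carrier_vec n" using st by simp
    have hs: "C (phi' k) *\<^sub>v lss_state A B phi' u' x0 k = (C (phi' k) * T 1) *\<^sub>v (S *\<^sub>v lss_state A B phi' u' x0 k)"
      by (rule hat_step(2)[OF Am S(2) S(1) S(3) xk]) (use uc in auto)
    show "lss_output ?Ac ?Bc (\<lambda>mu. Ch mu * minv (?U mu)) Dh phi' u' (minv (T 1) *\<^sub>v x0) k
        = lss_output A B C D phi' u' x0 k"
      unfolding lss_output_def S_def[symmetric] using st UA[OF j] hs by simp
  next
    fix w :: "nat list" assume w: "w \<noteq> []" and ws: "set w \<subseteq> {1..sigma}"
    let ?Ac = "\<lambda>mu. ?U mu * Ah mu * minv (?U mu)"
    let ?Bc = "\<lambda>mu. ?U mu * Bh mu"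
    let ?Cc = "\<lambda>mu. Ch mu * minv (?U mu)"
    show "markov ?Ac ?Bc ?Cc Dh w = markov A B C D w"
    proof (cases w)
      case Nil then show ?thesis using w by simp
    next
      case (Cons j0 w1)
      have j0: "j0 \<in> {1..sigma}" using ws Cons by auto
      show ?thesis
      proof (cases w1)
        case Nil then show ?thesis using Cons UA[OF j0] by simp
      next
        case (Cons j1 w2)
        let ?js = "butlast (j1 # w2)"
        have "last (j1 # w2) \<in> set w" using \<open>w = j0 # w1\<close> Cons last_in_set[of "j1 # w2"] by simp
        hence jl: "last (j1 # w2) \<in> {1..sigma}" using ws by blast
        have js: "set ?js \<subseteq> {1..sigma}" using ws \<open>w = j0 # w1\<close> Cons by (auto dest: in_set_butlastD)
        have B0: "B j0 \<in> carrier_mat n m" using dims[OF j0] by auto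
        have fs: "foldl (\<lambda>M j. ?Ac j * M) (S * B j0) ?js = S * foldl (\<lambda>M j. A j * M) (B j0) ?js
           \<and> foldl (\<lambda>M j. A j * M) (B j0) ?js \<in> carrier_mat n m"
          by (rule foldl_sim[OF S(1) S(2) S(3) js _ B0]) (use dims UA in auto)
        have Cl: "C (last (j1 # w2)) \<in> carrier_mat p n" using dims[OF jl] by auto
        have "markov ?Ac ?Bc ?Cc Dh w = ?Cc (last (j1 # w2)) * foldl (\<lambda>M j. ?Ac j * M) (?Bc j0) ?js"
          using \<open>w = j0 # w1\<close> Cons by simp
        also have "\<dots> = (C (last (j1 # w2)) * T 1) * (S * foldl (\<lambda>M j. A j * M) (B j0) ?js)"
          using UA[OF jl] UA[OF j0] fs by simp
        also have "\<dots> = C (last (j1 # w2)) * foldl (\<lambda>M j. A j * M) (B j0) ?js"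
          by (rule cancel_mid[OF Cl S(2) S(1) conjunct2[OF fs] S(3)])
        also have "\<dots> = markov A B C D w" using \<open>w = j0 # w1\<close> Cons by simp
        finally show ?thesis .
      qed
    qed
  qed
qed

end
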